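(* Let $M$ be a finitely generated graded $R$-module. Then $qp.Spec_g(M)$ with the quasi-Zariski topology is a $T_1$-space if and only if $qp.Spec_g(M)=Max_g(M)$. In this case, $qp.Spec_g(M)=Spec_g(M)=Max_g(M)$.
   Context: $R=\bigoplus_{g\in G}R_g$ is a graded commutative ring with identity graded by a group $G$, $h(R)=\bigcup_g R_g$; $M$ is a graded $R$-module, $h(M)$ its homogeneous elements. $Gr(I)$ is the graded radical of a graded ideal $I$. $(K:_RM)=\{r: rM\subseteq K\}$. Graded prime submodule: proper graded $P$ with $rm\in P$ ($r\in h(R), m\in h(M)$) implying $m\in P$ or $r\in(P:_RM)$; $Spec_g(M)$ is the set of graded prime submodules. $Gr_M(K)$: intersection of graded prime submodules containing $K$ ($M$ if none). Graded primeful property of $K$: for each graded prime $p\supseteq(K:_RM)$ there is a graded prime submodule $P\supseteq K$ with $(P:_RM)=p$. Graded quasi-primary submodule: proper graded $Q$ with $rm\in Q$ ($r\in h(R),m\in h(M)$) implying $r\in Gr((Q:_RM))$ or $m\in Gr_M(Q)$. $qp.Spec_g(M)$: graded quasi-primary submodules with the graded primeful property. $qp\text{-}V_M^g(K)=\{Q\in qp.Spec_g(M): Gr((Q:_RM))\supseteq Gr((K:_RM))\}$; the quasi-Zariski topology has closed sets exactly these. $Max_g(M)$ is the set of graded maximal submodules of $M$ (graded $K\neq M$ with no graded submodule strictly between $K$ and $M$). *)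

theory Defs
  imports "HOL-Analysis.Analysis"
begin

definition hdecomp :: "('g \<Rightarrow> 'a::comm_monoid_add set) \<Rightarrow> 'a \<Rightarrow> ('g \<Rightarrow> 'a) \<Rightarrow> bool" where
  "hdecomp A x c \<longleftrightarrow> finite {g. c g \<noteq> 0} \<and> (\<forall>g. c g \<in> A g) \<and> x = sum c {g. c g \<noteq> 0}"

definition internal_direct_sum :: "('g \<Rightarrow> 'a::ab_group_add set) \<Rightarrow> bool" where
  "internal_direct_sum A \<longleftrightarrow>
     (\<forall>g. 0 \<in> A g \<and> (\<forall>x\<in>A g. \<forall>y\<in>A g. x + y \<in> A g) \<and> (\<forall>x\<in>A g. - x \<in> A g))
     \<and> (\<forall>x. \<exists>!c. hdecomp A x c)"

definition graded_ring :: "('g::group_add \<Rightarrow> 'r::comm_ring_1 set) \<Rightarrow> bool" where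
  "graded_ring RG \<longleftrightarrow> internal_direct_sum RG \<and> (\<forall>g h. \<forall>a\<in>RG g. \<forall>b\<in>RG h. a * b \<in> RG (g + h))"

definition graded_module ::
  "('r::comm_ring_1 \<Rightarrow> 'm::ab_group_add \<Rightarrow> 'm) \<Rightarrow> ('g::group_add \<Rightarrow> 'r set) \<Rightarrow> ('g \<Rightarrow> 'm set) \<Rightarrow> bool" where
  "graded_module smul RG MG \<longleftrightarrow> graded_ring RG \<and> module smul \<and> internal_direct_sum MG
     \<and> (\<forall>g h. \<forall>a\<in>RG g. \<forall>m\<in>MG h. smul a m \<in> MG (g + h))"

definition homog :: "('g \<Rightarrow> 'a set) \<Rightarrow> 'a set" where
  "homog A = (\<Union>g. A g)"

definition graded_set :: "('g \<Rightarrow> 'a::comm_monoid_add set) \<Rightarrow> 'a set \<Rightarrow> bool" where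
  "graded_set A N \<longleftrightarrow> (\<forall>x\<in>N. \<exists>c. hdecomp (\<lambda>g. A g \<inter> N) x c)"

definition graded_submodule ::
  "('r::comm_ring_1 \<Rightarrow> 'm::ab_group_add \<Rightarrow> 'm) \<Rightarrow> ('g \<Rightarrow> 'm set) \<Rightarrow> 'm set \<Rightarrow> bool" where
  "graded_submodule smul MG N \<longleftrightarrow> module.subspace smul N \<and> graded_set MG N"

definition graded_ideal :: "('g \<Rightarrow> 'r::comm_ring_1 set) \<Rightarrow> 'r set \<Rightarrow> bool" where
  "graded_ideal RG I \<longleftrightarrow> 0 \<in> I \<and> (\<forall>x\<in>I. \<forall>y\<in>I. x + y \<in> I) \<and> (\<forall>r. \<forall>x\<in>I. r * x \<in> I)
     \<and> graded_set RG I"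

definition graded_prime_ideal :: "('g \<Rightarrow> 'r::comm_ring_1 set) \<Rightarrow> 'r set \<Rightarrow> bool" where
  "graded_prime_ideal RG P \<longleftrightarrow> graded_ideal RG P \<and> P \<noteq> UNIV
     \<and> (\<forall>a\<in>homog RG. \<forall>b\<in>homog RG. a * b \<in> P \<longrightarrow> a \<in> P \<or> b \<in> P)"

definition graded_radical :: "('g \<Rightarrow> 'r::comm_ring_1 set) \<Rightarrow> 'r set \<Rightarrow> 'r set" where
  "graded_radical RG I = {x. \<exists>c. hdecomp RG x c \<and> (\<forall>g. \<exists>n>0. c g ^ n \<in> I)}"

definition colon :: "('r \<Rightarrow> 'm \<Rightarrow> 'm) \<Rightarrow> 'm set \<Rightarrow> 'r set" where
  "colon smul K = {r. \<forall>m. smul r m \<in> K}"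

definition graded_prime_submodule ::
  "('r::comm_ring_1 \<Rightarrow> 'm::ab_group_add \<Rightarrow> 'm) \<Rightarrow> ('g \<Rightarrow> 'r set) \<Rightarrow> ('g \<Rightarrow> 'm set) \<Rightarrow> 'm set \<Rightarrow> bool" where
  "graded_prime_submodule smul RG MG P \<longleftrightarrow> graded_submodule smul MG P \<and> P \<noteq> UNIV
     \<and> (\<forall>r\<in>homog RG. \<forall>m\<in>homog MG. smul r m \<in> P \<longrightarrow> m \<in> P \<or> r \<in> colon smul P)"

definition Spec_g ::
  "('r::comm_ring_1 \<Rightarrow> 'm::ab_group_add \<Rightarrow> 'm) \<Rightarrow> ('g \<Rightarrow> 'r set) \<Rightarrow> ('g \<Rightarrow> 'm set) \<Rightarrow> 'm set set" where
  "Spec_g smul RG MG = {P. graded_prime_submodule smul RG MG P}"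

text \<open>Gr_M(K): intersection of graded primes containing K (= UNIV if there is none).\<close>
definition graded_M_radical ::
  "('r::comm_ring_1 \<Rightarrow> 'm::ab_group_add \<Rightarrow> 'm) \<Rightarrow> ('g \<Rightarrow> 'r set) \<Rightarrow> ('g \<Rightarrow> 'm set) \<Rightarrow> 'm set \<Rightarrow> 'm set" where
  "graded_M_radical smul RG MG K = \<Inter> {P \<in> Spec_g smul RG MG. K \<subseteq> P}"

definition graded_primeful ::
  "('r::comm_ring_1 \<Rightarrow> 'm::ab_group_add \<Rightarrow> 'm) \<Rightarrow> ('g \<Rightarrow> 'r set) \<Rightarrow> ('g \<Rightarrow> 'm set) \<Rightarrow> 'm set \<Rightarrow> bool" where
  "graded_primeful smul RG MG K \<longleftrightarrow>
     (\<forall>p. graded_prime_ideal RG p \<and> colon smul K \<subseteq> p \<longrightarrow>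
        (\<exists>P \<in> Spec_g smul RG MG. K \<subseteq> P \<and> colon smul P = p))"

definition graded_quasi_primary ::
  "('r::comm_ring_1 \<Rightarrow> 'm::ab_group_add \<Rightarrow> 'm) \<Rightarrow> ('g \<Rightarrow> 'r set) \<Rightarrow> ('g \<Rightarrow> 'm set) \<Rightarrow> 'm set \<Rightarrow> bool" where
  "graded_quasi_primary smul RG MG Q \<longleftrightarrow> graded_submodule smul MG Q \<and> Q \<noteq> UNIV
     \<and> (\<forall>r\<in>homog RG. \<forall>m\<in>homog MG. smul r m \<in> Q \<longrightarrow>
          r \<in> graded_radical RG (colon smul Q) \<or> m \<in> graded_M_radical smul RG MG Q)"

definition qp_Spec_g ::
  "('r::comm_ring_1 \<Rightarrow> 'm::ab_group_add \<Rightarrow> 'm) \<Rightarrow> ('g \<Rightarrow> 'r set) \<Rightarrow> ('g \<Rightarrow> 'm set) \<Rightarrow> 'm set set" where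
  "qp_Spec_g smul RG MG =
     {Q. graded_quasi_primary smul RG MG Q \<and> graded_primeful smul RG MG Q}"

definition qp_V ::
  "('r::comm_ring_1 \<Rightarrow> 'm::ab_group_add \<Rightarrow> 'm) \<Rightarrow> ('g \<Rightarrow> 'r set) \<Rightarrow> ('g \<Rightarrow> 'm set) \<Rightarrow> 'm set \<Rightarrow> 'm set set" where
  "qp_V smul RG MG K = {Q \<in> qp_Spec_g smul RG MG.
      graded_radical RG (colon smul K) \<subseteq> graded_radical RG (colon smul Q)}"

definition quasi_zariski ::
  "('r::comm_ring_1 \<Rightarrow> 'm::ab_group_add \<Rightarrow> 'm) \<Rightarrow> ('g \<Rightarrow> 'r set) \<Rightarrow> ('g \<Rightarrow> 'm set) \<Rightarrow> 'm set topology" where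
  "quasi_zariski smul RG MG = topology (\<lambda>U. \<exists>K. graded_submodule smul MG K
        \<and> U = qp_Spec_g smul RG MG - qp_V smul RG MG K)"

definition Max_g ::
  "('r::comm_ring_1 \<Rightarrow> 'm::ab_group_add \<Rightarrow> 'm) \<Rightarrow> ('g \<Rightarrow> 'm set) \<Rightarrow> 'm set set" where
  "Max_g smul MG = {K. graded_submodule smul MG K \<and> K \<noteq> UNIV
     \<and> (\<forall>N. graded_submodule smul MG N \<and> K \<subseteq> N \<longrightarrow> N = K \<or> N = UNIV)}"

definition finitely_generated :: "('r::comm_ring_1 \<Rightarrow> 'm::ab_group_add \<Rightarrow> 'm) \<Rightarrow> bool" where
  "finitely_generated smul \<longleftrightarrow> (\<exists>S. finite S \<and> module.span smul S = UNIV)"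

end

theory Submission
  imports Defs "Jordan_Normal_Form.Determinant"
begin

lemma hdecomp_sum_superset:
  assumes "finite T" "{g. c g \<noteq> 0} \<subseteq> T"
  shows "sum c {g. c g \<noteq> 0} = sum c T"
  by (rule sum.mono_neutral_left[OF assms]) auto

lemma ids_unique:
  assumes "internal_direct_sum A" "hdecomp A x c" "hdecomp A x d"
  shows "c = d"
  using assms unfolding internal_direct_sum_def by blast

lemma ids_exists:
  assumes "internal_direct_sum A"
  obtains c where "hdecomp A x c"
  using assms unfolding internal_direct_sum_def by blast

lemma ids_zero: "internal_direct_sum A \<Longrightarrow> 0 \<in> A g"
  unfolding internal_direct_sum_def by blast

lemma ids_add: "internal_direct_sum A \<Longrightarrow> x \<in> A g \<Longrightarrow> y \<in> A g \<Longrightarrow> x + y \<in> A g"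
  unfolding internal_direct_sum_def by blast

lemma hdecomp_single:
  assumes "\<And>h. 0 \<in> A h" "a \<in> A g"
  shows "hdecomp A a (\<lambda>h. if h = g then a else 0)"
proof -
  have "{h. (if h = g then a else 0) \<noteq> 0} \<subseteq> {g}" by auto
  then have "sum (\<lambda>h. if h = g then a else 0) {h. (if h = g then a else 0) \<noteq> 0}
      = sum (\<lambda>h. if h = g then a else 0) {g}"
    by (intro hdecomp_sum_superset) auto
  then show ?thesis using assms unfolding hdecomp_def
    by (auto intro: finite_subset[of _ "{g}"])
qed

lemma hdecomp_mono: "hdecomp A x c \<Longrightarrow> (\<And>g. A g \<subseteq> B g) \<Longrightarrow> hdecomp B x c"
  unfolding hdecomp_def by blast

lemma hdecomp_list:
  assumes "hdecomp A x c"
  shows "\<exists>xs. x = sum_list xs \<and> (\<forall>y\<in>set xs. \<exists>g. y = c g)"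
proof -
  have fin: "finite {g. c g \<noteq> 0}" using assms unfolding hdecomp_def by blast
  obtain gs where gs: "set gs = {g. c g \<noteq> 0}" "distinct gs"
    using finite_distinct_list[OF fin] by blast
  have "x = sum c {g. c g \<noteq> 0}" using assms unfolding hdecomp_def by blast
  also have "\<dots> = sum_list (map c gs)" using gs by (metis sum_list_distinct_conv_sum_set)
  finally show ?thesis by (intro exI[of _ "map c gs"]) auto
qed

lemma hdecomp_list_in:
  assumes "hdecomp A x c" "\<And>g. c g \<in> B"
  shows "\<exists>xs. set xs \<subseteq> B \<and> x = sum_list xs"
proof -
  obtain xs where xs: "x = sum_list xs" "\<forall>y\<in>set xs. \<exists>g. y = c g"
    using hdecomp_list[OF assms(1)] by blast
  have "set xs \<subseteq> B"
  proof
    fix y assume "y \<in> set xs"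
    then obtain g where "y = c g" using xs(2) by blast
    then show "y \<in> B" using assms(2) by simp
  qed
  then show ?thesis using xs(1) by blast
qed

lemma hdecomp_in: "hdecomp A x c \<Longrightarrow> c g \<in> A g"
  unfolding hdecomp_def by blast

lemma homog_I: "a \<in> A g \<Longrightarrow> a \<in> homog A"
  unfolding homog_def by blast

lemma homog_E: "a \<in> homog A \<Longrightarrow> (\<And>g. a \<in> A g \<Longrightarrow> P) \<Longrightarrow> P"
  unfolding homog_def by blast

lemma list_hdecomp:
  assumes zero: "\<And>g. 0 \<in> A g" and add: "\<And>g x y. x \<in> A g \<Longrightarrow> y \<in> A g \<Longrightarrow> x + y \<in> A g"
    and xs: "set xs \<subseteq> (\<Union>g. A g)"
  shows "\<exists>c. hdecomp A (sum_list xs) c"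
  using xs
proof (induction xs)
  case Nil
  have "hdecomp A 0 (\<lambda>_. 0)" unfolding hdecomp_def using zero by auto
  then show ?case by auto
next
  case (Cons y xs)
  then obtain c where c: "hdecomp A (sum_list xs) c" by auto
  from Cons.prems obtain g where g: "y \<in> A g" by auto
  define c' where "c' = c(g := c g + y)"
  have finc: "finite {h. c h \<noteq> 0}" using c unfolding hdecomp_def by blast
  let ?T = "insert g {h. c h \<noteq> 0}"
  have fin: "finite ?T" using finc by auto
  have s1: "{h. c' h \<noteq> 0} \<subseteq> ?T" unfolding c'_def by auto
  have "sum c' {h. c' h \<noteq> 0} = sum c' ?T"
    by (rule hdecomp_sum_superset[OF fin s1])
  also have "\<dots> = c' g + sum c' ({h. c h \<noteq> 0} - {g})"
    using fin by (subst sum.insert_remove) auto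
  also have "sum c' ({h. c h \<noteq> 0} - {g}) = sum c ({h. c h \<noteq> 0} - {g})"
    unfolding c'_def by (rule sum.cong) auto
  also have "sum c ?T = c g + sum c ({h. c h \<noteq> 0} - {g})"
    using fin by (subst sum.insert_remove) auto
  then have "c' g + sum c ({h. c h \<noteq> 0} - {g}) = y + sum c ?T"
    unfolding c'_def by (simp add: algebra_simps)
  also have "sum c ?T = sum c {h. c h \<noteq> 0}"
    by (rule hdecomp_sum_superset[symmetric]) (use fin in auto)
  also have "\<dots> = sum_list xs" using c unfolding hdecomp_def by simp
  finally have "sum c' {h. c' h \<noteq> 0} = sum_list (y # xs)" by simp
  moreover have "\<forall>h. c' h \<in> A h" using c g add unfolding c'_def hdecomp_def by auto
  moreover have "finite {h. c' h \<noteq> 0}" using fin s1 finite_subset by blast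
  ultimately have "hdecomp A (sum_list (y # xs)) c'" unfolding hdecomp_def by simp
  then show ?case by blast
qed

lemma hdecomp_shift:
  fixes F :: "'a::ab_group_add \<Rightarrow> 'b::ab_group_add"
  assumes c: "hdecomp A x c"
    and add: "\<And>a b. F (a + b) = F a + F b"
    and deg: "\<And>g a. a \<in> A g \<Longrightarrow> F a \<in> B (\<phi> g)"
    and inv1: "\<And>g. \<phi> (\<psi> g) = g" and inv2: "\<And>g. \<psi> (\<phi> g) = g"
  shows "hdecomp B (F x) (\<lambda>k. F (c (\<psi> k)))"
proof -
  interpret additive F by standard (rule add)
  let ?S = "{g. c g \<noteq> 0}"
  have fin: "finite ?S" using c unfolding hdecomp_def by blast
  have sub: "{k. F (c (\<psi> k)) \<noteq> 0} \<subseteq> \<phi> ` ?S"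
  proof
    fix k assume "k \<in> {k. F (c (\<psi> k)) \<noteq> 0}"
    then have "c (\<psi> k) \<noteq> 0" using zero by auto
    then show "k \<in> \<phi> ` ?S" using inv1[of k] by (metis (mono_tags) image_eqI mem_Collect_eq)
  qed
  have finB: "finite (\<phi> ` ?S)" using fin by auto
  have injphi: "inj_on \<phi> ?S" by (metis inj_onI inv2)
  have "sum (\<lambda>k. F (c (\<psi> k))) {k. F (c (\<psi> k)) \<noteq> 0} = sum (\<lambda>k. F (c (\<psi> k))) (\<phi> ` ?S)"
    by (rule hdecomp_sum_superset[OF finB sub])
  also have "\<dots> = sum (\<lambda>g. F (c g)) ?S"
    by (subst sum.reindex[OF injphi]) (simp add: inv2)
  also have "\<dots> = F (sum c ?S)" by (rule sum[symmetric])
  also have "sum c ?S = x" using c unfolding hdecomp_def by simp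
  finally have e: "sum (\<lambda>k. F (c (\<psi> k))) {k. F (c (\<psi> k)) \<noteq> 0} = F x" .
  have "\<forall>k. F (c (\<psi> k)) \<in> B k"
  proof
    fix k have "c (\<psi> k) \<in> A (\<psi> k)" using c unfolding hdecomp_def by blast
    from deg[OF this] show "F (c (\<psi> k)) \<in> B k" by (simp add: inv1)
  qed
  then show ?thesis unfolding hdecomp_def using e finite_subset[OF sub finB] by simp
qed

lemma (in Modules.module) scale_sum_list_right: "scale a (sum_list ms) = sum_list (map (scale a) ms)"
  by (induction ms) (auto simp: scale_right_distrib)

lemma (in Modules.module) scale_sum_list_left: "scale (sum_list rs) m = sum_list (map (\<lambda>a. scale a m) rs)"
  by (induction rs) (auto simp: scale_left_distrib)

lemma sum_list_concat': "sum_list (concat xss) = sum_list (map sum_list xss)"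
  by (induction xss) auto

lemma (in Modules.module) scale_sum_list_both:
  "scale (sum_list rs) (sum_list ms) = sum_list (concat (map (\<lambda>a. map (scale a) ms) rs))"
  by (induction rs) (simp_all add: scale_left_distrib scale_sum_list_right[symmetric])

lemma (in Modules.module) sum_list_in_subspace:
  "subspace N \<Longrightarrow> set xs \<subseteq> N \<Longrightarrow> sum_list xs \<in> N"
  by (induction xs) (auto simp: subspace_0 subspace_add)

locale gmod =
  fixes smul :: "'r::comm_ring_1 \<Rightarrow> 'm::ab_group_add \<Rightarrow> 'm"
    and RG :: "'g::group_add \<Rightarrow> 'r set"
    and MG :: "'g \<Rightarrow> 'm set"
  assumes gm: "graded_module smul RG MG"
begin

lemma mod: "Modules.module smul" using gm unfolding graded_module_def by blast

sublocale M: Modules.module smul by (rule mod)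

lemma idsR: "internal_direct_sum RG" using gm unfolding graded_module_def graded_ring_def by blast
lemma idsM: "internal_direct_sum MG" using gm unfolding graded_module_def by blast
lemma mulR: "a \<in> RG g \<Longrightarrow> b \<in> RG h \<Longrightarrow> a * b \<in> RG (g + h)"
  using gm unfolding graded_module_def graded_ring_def by blast
lemma degM: "a \<in> RG g \<Longrightarrow> m \<in> MG h \<Longrightarrow> smul a m \<in> MG (g + h)"
  using gm unfolding graded_module_def by blast

lemma homR_mult: "a \<in> homog RG \<Longrightarrow> b \<in> homog RG \<Longrightarrow> a * b \<in> homog RG"
  unfolding homog_def using mulR by blast

lemma homR_pow: "a \<in> homog RG \<Longrightarrow> n > 0 \<Longrightarrow> a ^ n \<in> homog RG"
proof (induction n)
  case (Suc n) then show ?case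
    by (cases "n = 0") (auto intro: homR_mult)
qed auto

lemma homM_smul: "a \<in> homog RG \<Longrightarrow> m \<in> homog MG \<Longrightarrow> smul a m \<in> homog MG"
  unfolding homog_def using degM by blast

lemma decompR_list: "\<exists>xs. set xs \<subseteq> homog RG \<and> r = sum_list xs"
proof -
  obtain c where c: "hdecomp RG r c" using ids_exists[OF idsR] by blast
  show ?thesis by (rule hdecomp_list_in[OF c]) (rule homog_I, rule hdecomp_in[OF c])
qed

lemma decompM_list: "\<exists>xs. set xs \<subseteq> homog MG \<and> m = sum_list xs"
proof -
  obtain c where c: "hdecomp MG m c" using ids_exists[OF idsM] by blast
  show ?thesis by (rule hdecomp_list_in[OF c]) (rule homog_I, rule hdecomp_in[OF c])
qed

lemma graded_sub_list:
  assumes "graded_submodule smul MG N" "x \<in> N"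
  shows "\<exists>xs. set xs \<subseteq> homog MG \<inter> N \<and> x = sum_list xs"
proof -
  obtain c where c: "hdecomp (\<lambda>g. MG g \<inter> N) x c"
    using assms unfolding graded_submodule_def graded_set_def by blast
  have "c g \<in> homog MG \<inter> N" for g using hdecomp_in[OF c, of g] homog_I[of _ MG g] by blast
  then show ?thesis by (rule hdecomp_list_in[OF c])
qed

lemma comp_in:
  assumes "graded_submodule smul MG N" "x \<in> N" "hdecomp MG x d"
  shows "d g \<in> N"
proof -
  obtain c where c: "hdecomp (\<lambda>g. MG g \<inter> N) x c"
    using assms unfolding graded_submodule_def graded_set_def by blast
  have "hdecomp MG x c" by (rule hdecomp_mono[OF c]) auto
  with assms(3) have "c = d" using ids_unique[OF idsM] by blast
  then show ?thesis using c unfolding hdecomp_def by blast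
qed

lemma graded_intro:
  assumes "M.subspace N"
    and "\<And>x. x \<in> N \<Longrightarrow> \<exists>xs. set xs \<subseteq> homog MG \<inter> N \<and> x = sum_list xs"
  shows "graded_submodule smul MG N"
  unfolding graded_submodule_def graded_set_def
proof (intro conjI ballI)
  show "M.subspace N" by fact
  fix x assume "x \<in> N"
  then obtain xs where xs: "set xs \<subseteq> homog MG \<inter> N" "x = sum_list xs" using assms by blast
  have "\<exists>c. hdecomp (\<lambda>g. MG g \<inter> N) (sum_list xs) c"
  proof (rule list_hdecomp)
    show "0 \<in> MG g \<inter> N" for g using ids_zero[OF idsM] M.subspace_0[OF assms(1)] by blast
    show "a + b \<in> MG g \<inter> N" if "a \<in> MG g \<inter> N" "b \<in> MG g \<inter> N" for g a b
      using that ids_add[OF idsM] M.subspace_add[OF assms(1)] by blast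
    show "set xs \<subseteq> (\<Union>g. MG g \<inter> N)" using xs(1) unfolding homog_def by blast
  qed
  then show "\<exists>c. hdecomp (\<lambda>g. MG g \<inter> N) x c" using xs by simp
qed

lemma graded_span:
  assumes "\<And>x. x \<in> X \<Longrightarrow> \<exists>xs. set xs \<subseteq> homog MG \<inter> M.span X \<and> x = sum_list xs"
  shows "graded_submodule smul MG (M.span X)"
proof (rule graded_intro)
  let ?P = "\<lambda>x. \<exists>xs. set xs \<subseteq> homog MG \<inter> M.span X \<and> x = sum_list xs"
  fix x assume x: "x \<in> M.span X"
  have sub: "M.subspace (Collect ?P)" unfolding M.subspace_def
    proof (intro conjI allI ballI)
      show "0 \<in> Collect ?P" by (intro CollectI exI[of _ "[]"]) auto
      fix x y assume "x \<in> Collect ?P" "y \<in> Collect ?P"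
      then obtain xs ys where "set xs \<subseteq> homog MG \<inter> M.span X" "x = sum_list xs"
        "set ys \<subseteq> homog MG \<inter> M.span X" "y = sum_list ys" by blast
      then show "x + y \<in> Collect ?P" by (intro CollectI exI[of _ "xs @ ys"]) auto
    next
      fix c x assume "x \<in> Collect ?P"
      then obtain xs where xs: "set xs \<subseteq> homog MG \<inter> M.span X" "x = sum_list xs" by blast
      obtain cs where cs: "set cs \<subseteq> homog RG" "c = sum_list cs" using decompR_list by blast
      have "smul c x = sum_list (concat (map (\<lambda>a. map (smul a) xs) cs))"
        using xs cs M.scale_sum_list_both by simp
      moreover have "set (concat (map (\<lambda>a. map (smul a) xs) cs)) \<subseteq> homog MG \<inter> M.span X"
        using xs(1) cs(1) by (auto intro!: homM_smul M.span_scale)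
      ultimately show "smul c x \<in> Collect ?P" by blast
    qed
  have "x \<in> Collect ?P"
    by (rule M.span_subspace_induct[OF x sub]) (use assms in blast)
  then show "?P x" by (rule CollectD)
qed (rule M.subspace_span)

lemma graded_inter:
  assumes "graded_submodule smul MG N1" "graded_submodule smul MG N2"
  shows "graded_submodule smul MG (N1 \<inter> N2)"
proof (rule graded_intro)
  show "M.subspace (N1 \<inter> N2)" using assms unfolding graded_submodule_def
    by (simp add: M.subspace_inter)
  fix x assume x: "x \<in> N1 \<inter> N2"
  obtain c where c: "hdecomp MG x c" using ids_exists[OF idsM] by blast
  have "\<forall>g. c g \<in> MG g \<inter> N1 \<inter> N2"
  proof
    fix g
    have "c g \<in> MG g" using c unfolding hdecomp_def by blast
    moreover have "c g \<in> N1" using comp_in[OF assms(1) _ c] x by blast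
    moreover have "c g \<in> N2" using comp_in[OF assms(2) _ c] x by blast
    ultimately show "c g \<in> MG g \<inter> N1 \<inter> N2" by blast
  qed
  then have "c g \<in> homog MG \<inter> (N1 \<inter> N2)" for g using homog_I[of _ MG g] by blast
  then show "\<exists>xs. set xs \<subseteq> homog MG \<inter> (N1 \<inter> N2) \<and> x = sum_list xs"
    by (rule hdecomp_list_in[OF c])
qed

lemma graded_UNIV: "graded_submodule smul MG UNIV"
  by (rule graded_intro) (use decompM_list in auto)

lemma graded_sub_span:
  assumes "graded_submodule smul MG N" shows "M.span N = N"
  using assms unfolding graded_submodule_def by simp

end

lemma module_mult: "Modules.module ((*) :: 'r::comm_ring_1 \<Rightarrow> 'r \<Rightarrow> 'r)"
  by standard (auto simp: algebra_simps)

lemma gmod_ring: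
  assumes "gmod smul RG MG"
  shows "gmod ((*) :: 'r::comm_ring_1 \<Rightarrow> 'r \<Rightarrow> 'r) RG RG"
proof -
  interpret gmod smul RG MG by fact
  have "Modules.module ((*) :: 'r \<Rightarrow> 'r \<Rightarrow> 'r)" by standard (auto simp: algebra_simps)
  moreover have "graded_ring RG" using gm unfolding graded_module_def by blast
  ultimately show ?thesis unfolding gmod_def graded_module_def using idsR mulR by blast
qed

lemma graded_ideal_iff: "graded_ideal RG I \<longleftrightarrow> graded_submodule (*) RG I"
  unfolding graded_ideal_def graded_submodule_def Modules.module.subspace_def[OF module_mult] by auto

definition idl :: "'r::comm_ring_1 set \<Rightarrow> bool" where
  "idl J \<longleftrightarrow> 0 \<in> J \<and> (\<forall>x\<in>J. \<forall>y\<in>J. x + y \<in> J) \<and> (\<forall>r. \<forall>x\<in>J. r * x \<in> J)"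

lemma idl_0: "idl J \<Longrightarrow> 0 \<in> J" unfolding idl_def by blast
lemma idl_add: "idl J \<Longrightarrow> x \<in> J \<Longrightarrow> y \<in> J \<Longrightarrow> x + y \<in> J" unfolding idl_def by blast
lemma idl_mult: "idl J \<Longrightarrow> x \<in> J \<Longrightarrow> r * x \<in> J" unfolding idl_def by blast
lemma idl_mult2: "idl J \<Longrightarrow> x \<in> J \<Longrightarrow> x * r \<in> J" unfolding idl_def by (metis mult.commute)
lemma idl_uminus: "idl J \<Longrightarrow> x \<in> J \<Longrightarrow> - x \<in> J"
  using idl_mult[of J x "-1"] by simp
lemma idl_diff: "idl J \<Longrightarrow> x \<in> J \<Longrightarrow> y \<in> J \<Longrightarrow> x - y \<in> J"
  using idl_add[of J x "-y"] idl_uminus[of J y] by simp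
lemma idl_sum: "idl J \<Longrightarrow> (\<And>i. i \<in> F \<Longrightarrow> f i \<in> J) \<Longrightarrow> sum f F \<in> J"
  by (induction F rule: infinite_finite_induct) (auto intro: idl_0 idl_add)

lemma prod_diff_idl:
  assumes "idl J" "finite F" "\<And>i. i \<in> F \<Longrightarrow> f i - g i \<in> J"
  shows "prod f F - prod g F \<in> J"
  using assms(2,3)
proof (induction F rule: finite_induct)
  case empty then show ?case using idl_0[OF assms(1)] by simp
next
  case (insert x F)
  have e: "prod f (insert x F) - prod g (insert x F)
      = f x * (prod f F - prod g F) + (f x - g x) * prod g F"
    using insert.hyps by (simp add: algebra_simps)
  show ?case unfolding e using insert assms(1)
    by (intro idl_add idl_mult idl_mult2) auto
qed

context Modules.module
begin

lemma subspace_sum': "subspace K \<Longrightarrow> (\<And>i. i \<in> F \<Longrightarrow> f i \<in> K) \<Longrightarrow> sum f F \<in> K"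
  by (induction F rule: infinite_finite_induct) (auto intro: subspace_0 subspace_add)

lemma span_list_repr:
  assumes "y \<in> span (set xs)"
  shows "\<exists>c. y = (\<Sum>i\<in>{0..<length xs}. scale (c i) (xs ! i))"
proof -
  let ?P = "{y. \<exists>c. y = (\<Sum>i\<in>{0..<length xs}. scale (c i) (xs ! i))}"
  have sub: "subspace ?P" unfolding subspace_def
  proof (intro conjI ballI allI)
    show "0 \<in> ?P" by (intro CollectI exI[of _ "\<lambda>_. 0"]) simp
    fix x y assume "x \<in> ?P" "y \<in> ?P"
    then obtain c d where "x = (\<Sum>i\<in>{0..<length xs}. scale (c i) (xs ! i))"
      "y = (\<Sum>i\<in>{0..<length xs}. scale (d i) (xs ! i))" by blast
    then have "x + y = (\<Sum>i\<in>{0..<length xs}. scale (c i + d i) (xs ! i))"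
      by (simp add: scale_left_distrib sum.distrib)
    then show "x + y \<in> ?P" by (intro CollectI exI[of _ "\<lambda>i. c i + d i"])
  next
    fix r x assume "x \<in> ?P"
    then obtain c where "x = (\<Sum>i\<in>{0..<length xs}. scale (c i) (xs ! i))" by blast
    then have "scale r x = (\<Sum>i\<in>{0..<length xs}. scale (r * c i) (xs ! i))"
      by (simp add: scale_sum_right)
    then show "scale r x \<in> ?P" by (intro CollectI exI[of _ "\<lambda>i. r * c i"])
  qed
  have "y \<in> ?P"
  proof (rule span_subspace_induct[OF assms sub])
    fix x assume "x \<in> set xs"
    then obtain j where j: "j < length xs" "x = xs ! j" by (auto simp: in_set_conv_nth)
    have "(\<Sum>i\<in>{0..<length xs}. scale (if i = j then 1 else 0) (xs ! i))
        = (\<Sum>i\<in>{0..<length xs}. if i = j then xs ! i else 0)"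
      by (rule sum.cong) auto
    also have "\<dots> = xs ! j" using j by simp
    finally show "x \<in> ?P" using j by (intro CollectI exI[of _ "\<lambda>i. if i = j then 1 else 0"]) simp
  qed
  then show ?thesis by simp
qed

lemma ext_repr:
  assumes span: "span (set xs) = UNIV" and K: "subspace K" and J: "idl J"
    and y: "y \<in> span (K \<union> {scale j m | j m. j \<in> J})"
  shows "\<exists>a k. (\<forall>i. a i \<in> J) \<and> k \<in> K \<and> y = (\<Sum>i\<in>{0..<length xs}. scale (a i) (xs ! i)) + k"
proof -
  let ?P = "{y. \<exists>a k. (\<forall>i. a i \<in> J) \<and> k \<in> K \<and> y = (\<Sum>i\<in>{0..<length xs}. scale (a i) (xs ! i)) + k}"
  have sub: "subspace ?P" unfolding subspace_def
  proof (intro conjI ballI allI)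
    show "0 \<in> ?P" using idl_0[OF J] subspace_0[OF K]
      by (intro CollectI exI[of _ "\<lambda>_. 0"] exI[of _ 0]) simp
    fix x y assume "x \<in> ?P" "y \<in> ?P"
    then obtain a k b l where "\<forall>i. a i \<in> J" "k \<in> K" "x = (\<Sum>i\<in>{0..<length xs}. scale (a i) (xs ! i)) + k"
      "\<forall>i. b i \<in> J" "l \<in> K" "y = (\<Sum>i\<in>{0..<length xs}. scale (b i) (xs ! i)) + l" by blast
    moreover then have "x + y = (\<Sum>i\<in>{0..<length xs}. scale (a i + b i) (xs ! i)) + (k + l)"
      by (simp add: scale_left_distrib sum.distrib algebra_simps)
    ultimately show "x + y \<in> ?P" using idl_add[OF J] subspace_add[OF K]
      by (intro CollectI exI[of _ "\<lambda>i. a i + b i"] exI[of _ "k + l"]) auto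
  next
    fix r x assume "x \<in> ?P"
    then obtain a k where "\<forall>i. a i \<in> J" "k \<in> K" "x = (\<Sum>i\<in>{0..<length xs}. scale (a i) (xs ! i)) + k" by blast
    moreover then have "scale r x = (\<Sum>i\<in>{0..<length xs}. scale (r * a i) (xs ! i)) + scale r k"
      by (simp add: scale_sum_right scale_right_distrib)
    ultimately show "scale r x \<in> ?P" using idl_mult[OF J] subspace_scale[OF K]
      by (intro CollectI exI[of _ "\<lambda>i. r * a i"] exI[of _ "scale r k"]) auto
  qed
  have "y \<in> ?P"
  proof (rule span_subspace_induct[OF y sub])
    fix x assume "x \<in> K \<union> {scale j m | j m. j \<in> J}"
    then consider "x \<in> K" | j m where "j \<in> J" "x = scale j m" by blast
    then show "x \<in> ?P"
    proof cases
      case 1 then show ?thesis using idl_0[OF J]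
        by (intro CollectI exI[of _ "\<lambda>_. 0"] exI[of _ x]) simp
    next
      case 2
      obtain c where c: "m = (\<Sum>i\<in>{0..<length xs}. scale (c i) (xs ! i))"
        using span_list_repr[of m xs] span by auto
      have "x = (\<Sum>i\<in>{0..<length xs}. scale (c i * j) (xs ! i)) + 0"
        using 2 c by (simp add: scale_sum_right mult.commute)
      then show ?thesis using idl_mult[OF J 2(1)] subspace_0[OF K]
        by (intro CollectI exI[of _ "\<lambda>i. c i * j"] exI[of _ 0]) auto
    qed
  qed
  then show ?thesis by simp
qed

end

context Modules.module
begin

lemma det_trick:
  assumes S: "finite S" "span S = UNIV" and K: "subspace K" and J: "idl J"
    and t: "\<And>m. scale t m \<in> span (K \<union> {scale j m' | j m'. j \<in> J})"
  shows "\<exists>n>0. \<exists>a\<in>J. \<forall>m. scale (t ^ n + a) m \<in> K"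
proof -
  obtain xs where xs: "set xs = S" using finite_list[OF S(1)] by blast
  define n where "n = length xs"
  show ?thesis
  proof (cases "n = 0")
    case True
    then have "S = {}" using xs n_def by auto
    then have "(m::'b) = 0" for m
    proof -
      have "m \<in> span S" using S(2) by simp
      then show ?thesis using \<open>S = {}\<close> by simp
    qed
    then have "scale (t ^ 1 + 0) m \<in> K" for m using subspace_0[OF K] by (metis scale_zero_right)
    then show ?thesis using idl_0[OF J] by blast
  next
    case False
    have spanxs: "span (set xs) = UNIV" using xs S by simp
    have "\<forall>i. \<exists>a k. (\<forall>l. a l \<in> J) \<and> k \<in> K \<and>
        scale t (xs ! i) = (\<Sum>l\<in>{0..<n}. scale (a l) (xs ! l)) + k"
      using ext_repr[OF spanxs K J t] unfolding n_def by blast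
    then obtain A kk where A: "\<And>i l. A i l \<in> J" and kk: "\<And>i. kk i \<in> K"
      and eq: "\<And>i. scale t (xs ! i) = (\<Sum>l\<in>{0..<n}. scale (A i l) (xs ! l)) + kk i"
      by metis
    define B where "B = Matrix.mat n n (\<lambda>(i,l). (if i = l then t else 0) - A i l)"
    have Bc: "B \<in> carrier_mat n n" unfolding B_def by simp
    have Bij: "i < n \<Longrightarrow> l < n \<Longrightarrow> B $$ (i,l) = (if i = l then t else 0) - A i l" for i l
      unfolding B_def by simp
    have claim1: "(\<Sum>l\<in>{0..<n}. scale (B $$ (i,l)) (xs ! l)) = kk i" if i: "i < n" for i
    proof -
      have "(\<Sum>l\<in>{0..<n}. scale (B $$ (i,l)) (xs ! l))
          = (\<Sum>l\<in>{0..<n}. (if i = l then scale t (xs ! l) else 0) - scale (A i l) (xs ! l))"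
        by (rule sum.cong) (auto simp: Bij i scale_left_diff_distrib)
      also have "\<dots> = scale t (xs ! i) - (\<Sum>l\<in>{0..<n}. scale (A i l) (xs ! l))"
        using i by (simp add: sum_subtractf)
      also have "\<dots> = kk i" using eq[of i] by simp
      finally show ?thesis .
    qed
    define C where "C = adj_mat B"
    have Cc: "C \<in> carrier_mat n n" and CB: "C * B = Determinant.det B \<cdot>\<^sub>m 1\<^sub>m n"
      using adj_mat[OF Bc] unfolding C_def by auto
    have CBent: "(\<Sum>i\<in>{0..<n}. C $$ (p,i) * B $$ (i,l)) = (if p = l then Determinant.det B else 0)"
      if "p < n" "l < n" for p l
    proof -
      have "(C * B) $$ (p,l) = (\<Sum>i\<in>{0..<n}. C $$ (p,i) * B $$ (i,l))"
        using that Cc Bc by (simp add: scalar_prod_def)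
      then have "Determinant.det B * (if p = l then 1 else 0) = (\<Sum>i\<in>{0..<n}. C $$ (p,i) * B $$ (i,l))"
        using CB that by simp
      then show ?thesis by (cases "p = l") simp_all
    qed
    have claim2: "scale (Determinant.det B) (xs ! p) \<in> K" if p: "p < n" for p
    proof -
      have "(\<Sum>i\<in>{0..<n}. scale (C $$ (p,i)) (kk i)) \<in> K"
        by (rule subspace_sum'[OF K]) (use kk subspace_scale[OF K] in blast)
      also have "(\<Sum>i\<in>{0..<n}. scale (C $$ (p,i)) (kk i))
          = (\<Sum>i\<in>{0..<n}. \<Sum>l\<in>{0..<n}. scale (C $$ (p,i) * B $$ (i,l)) (xs ! l))"
        by (rule sum.cong) (auto simp: claim1[symmetric] scale_sum_right)
      also have "\<dots> = (\<Sum>l\<in>{0..<n}. \<Sum>i\<in>{0..<n}. scale (C $$ (p,i) * B $$ (i,l)) (xs ! l))"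
        by (rule sum.swap)
      also have "\<dots> = (\<Sum>l\<in>{0..<n}. scale (\<Sum>i\<in>{0..<n}. C $$ (p,i) * B $$ (i,l)) (xs ! l))"
        by (simp add: scale_sum_left)
      also have "\<dots> = (\<Sum>l\<in>{0..<n}. if l = p then scale (Determinant.det B) (xs ! l) else 0)"
        by (rule sum.cong) (auto simp: CBent p)
      also have "\<dots> = scale (Determinant.det B) (xs ! p)" using p by simp
      finally show ?thesis .
    qed
    have claim3: "scale (Determinant.det B) m \<in> K" for m
    proof -
      obtain c where c: "m = (\<Sum>i\<in>{0..<n}. scale (c i) (xs ! i))"
        using span_list_repr[of m xs] spanxs unfolding n_def by auto
      have "scale (Determinant.det B) m = (\<Sum>i\<in>{0..<n}. scale (c i) (scale (Determinant.det B) (xs ! i)))"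
        unfolding c by (simp add: scale_sum_right mult.commute)
      also have "\<dots> \<in> K"
      proof (rule subspace_sum'[OF K])
        fix i assume "i \<in> {0..<n}"
        then show "scale (c i) (scale (Determinant.det B) (xs ! i)) \<in> K"
          by (intro subspace_scale[OF K] claim2) simp
      qed
      finally show ?thesis .
    qed
    define T where "T = t \<cdot>\<^sub>m (1\<^sub>m n :: 'a mat)"
    have Tc: "T \<in> carrier_mat n n" unfolding T_def by simp
    have detT: "Determinant.det T = t ^ n" unfolding T_def by simp
    have Tij: "i < n \<Longrightarrow> l < n \<Longrightarrow> T $$ (i,l) = (if i = l then t else 0)" for i l
      unfolding T_def by simp
    have fin: "finite {p. p permutes {0..<n}}" by (simp add: finite_permutations)
    have "Determinant.det B - Determinant.det T
       = (\<Sum>p\<in>{p. p permutes {0..<n}}. signof p * ((\<Prod>i = 0..<n. B $$ (i, p i)) - (\<Prod>i = 0..<n. T $$ (i, p i))))"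
      unfolding det_def'[OF Bc] det_def'[OF Tc] sum_subtractf[symmetric] by (simp add: algebra_simps)
    also have "\<dots> \<in> J"
    proof (rule idl_sum[OF J])
      fix p assume "p \<in> {p. p permutes {0..<n}}"
      then have pp: "p permutes {0..<n}" by simp
      have "(\<Prod>i = 0..<n. B $$ (i, p i)) - (\<Prod>i = 0..<n. T $$ (i, p i)) \<in> J"
      proof (rule prod_diff_idl[OF J])
        fix i assume "i \<in> {0..<n}"
        then have "i < n" "p i < n" using permutes_in_image[OF pp] by auto
        then have "B $$ (i, p i) - T $$ (i, p i) = - A i (p i)" by (simp add: Bij Tij)
        then show "B $$ (i, p i) - T $$ (i, p i) \<in> J" using idl_uminus[OF J A] by simp
      qed simp
      then show "signof p * ((\<Prod>i = 0..<n. B $$ (i, p i)) - (\<Prod>i = 0..<n. T $$ (i, p i))) \<in> J"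
        by (rule idl_mult[OF J])
    qed
    finally have aJ: "Determinant.det B - t ^ n \<in> J" using detT by simp
    show ?thesis
      using False claim3 aJ by (intro exI[of _ n] conjI bexI[of _ "Determinant.det B - t ^ n"]) auto
  qed
qed

end

definition rad :: "'r::comm_ring_1 set \<Rightarrow> 'r set" where
  "rad I = {y. \<exists>n>0. y ^ n \<in> I}"

lemma rad_sub: "I \<subseteq> rad I" unfolding rad_def by (auto intro: exI[of _ 1])

lemma rad_add:
  assumes J: "idl J" and x: "x ^ n \<in> J" and y: "y ^ m \<in> J"
  shows "(x + y) ^ (n + m) \<in> J"
proof -
  have "(x + y) ^ (n + m) = (\<Sum>k\<le>n + m. of_nat ((n + m) choose k) * x ^ k * y ^ (n + m - k))"
    by (rule binomial_ring)
  also have "\<dots> \<in> J"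
  proof (rule idl_sum[OF J])
    fix k assume "k \<in> {..n + m}"
    show "of_nat ((n + m) choose k) * x ^ k * y ^ (n + m - k) \<in> J"
    proof (cases "n \<le> k")
      case True
      then have "x ^ k = x ^ n * x ^ (k - n)" by (metis le_add_diff_inverse power_add)
      then show ?thesis using idl_mult[OF J] idl_mult2[OF J] x
        by (simp add: mult.assoc mult.left_commute)
    next
      case False
      then have "m \<le> n + m - k" by simp
      then have "y ^ (n + m - k) = y ^ m * y ^ (n + m - k - m)" by (metis le_add_diff_inverse power_add)
      then show ?thesis using idl_mult[OF J] idl_mult2[OF J] y
        by (simp add: mult.assoc mult.left_commute)
    qed
  qed
  finally show ?thesis .
qed

lemma rad_idl: assumes J: "idl J" shows "idl (rad J)"
  unfolding idl_def rad_def
proof (intro conjI ballI allI)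
  show "0 \<in> {y. \<exists>n>0. y ^ n \<in> J}" using idl_0[OF J] by (auto intro: exI[of _ 1])
  fix x y assume "x \<in> {y. \<exists>n>0. y ^ n \<in> J}" "y \<in> {y. \<exists>n>0. y ^ n \<in> J}"
  then obtain n m where "n > 0" "x ^ n \<in> J" "m > 0" "y ^ m \<in> J" by blast
  then show "x + y \<in> {y. \<exists>n>0. y ^ n \<in> J}" using rad_add[OF J] by (intro CollectI exI[of _ "n + m"]) auto
next
  fix r x assume "x \<in> {y. \<exists>n>0. y ^ n \<in> J}"
  then obtain n where "n > 0" "x ^ n \<in> J" by blast
  then show "r * x \<in> {y. \<exists>n>0. y ^ n \<in> J}"
    using idl_mult[OF J, of "x ^ n" "r ^ n"] by (intro CollectI exI[of _ n]) (auto simp: power_mult_distrib)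
qed

lemma rad_pow: assumes "idl I" "x \<in> rad I" "n > 0" shows "x ^ n \<in> rad I"
proof -
  obtain k where k: "k > 0" "x ^ k \<in> I" using assms(2) unfolding rad_def by blast
  have "(x ^ n) ^ k = (x ^ k) ^ n" by (simp add: power_mult[symmetric] mult.commute)
  also have "\<dots> = x ^ k * (x ^ k) ^ (n - 1)" using assms(3) by (cases n) auto
  also have "\<dots> \<in> I" using idl_mult2[OF assms(1) k(2)] .
  finally show ?thesis unfolding rad_def using k(1) by blast
qed

lemma rad_rad: assumes "x ^ n \<in> rad I" "n > 0" shows "x \<in> rad I"
proof -
  obtain k where k: "k > 0" "(x ^ n) ^ k \<in> I" using assms(1) unfolding rad_def by blast
  then have "x ^ (n * k) \<in> I" by (simp add: power_mult)
  then show ?thesis unfolding rad_def using k(1) assms(2) by (intro CollectI exI[of _ "n * k"]) simp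
qed

lemma graded_ideal_idl: "graded_ideal RG I \<Longrightarrow> idl I"
  unfolding graded_ideal_def idl_def by blast

context gmod
begin

lemma ring_gmod: "gmod ((*) :: 'r \<Rightarrow> 'r \<Rightarrow> 'r) RG RG"
  by (rule gmod_ring[OF gmod_axioms])

interpretation R: gmod "(*) :: 'r \<Rightarrow> 'r \<Rightarrow> 'r" RG RG by (rule ring_gmod)

lemma colon_idl: "M.subspace N \<Longrightarrow> idl (colon smul N)"
  unfolding idl_def colon_def
  by (auto simp: M.subspace_0 M.subspace_add M.scale_left_distrib M.subspace_scale simp flip: M.scale_scale)

lemma colon_homog:
  assumes "M.subspace N" "\<And>m. m \<in> homog MG \<Longrightarrow> smul r m \<in> N"
  shows "r \<in> colon smul N"
  unfolding colon_def
proof (intro CollectI allI)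
  fix m
  obtain ms where ms: "set ms \<subseteq> homog MG" "m = sum_list ms" using decompM_list by blast
  have "smul r m = sum_list (map (smul r) ms)" using ms M.scale_sum_list_right by simp
  also have "\<dots> \<in> N" using ms(1) assms by (intro M.sum_list_in_subspace) auto
  finally show "smul r m \<in> N" .
qed

lemma colon_graded:
  assumes N: "graded_submodule smul MG N"
  shows "graded_ideal RG (colon smul N)"
proof -
  have sub: "M.subspace N" using N unfolding graded_submodule_def by blast
  have "graded_set RG (colon smul N)"
    unfolding graded_set_def
  proof
    fix r assume r: "r \<in> colon smul N"
    obtain c where c: "hdecomp RG r c" using ids_exists[OF idsR] by blast
    have "c g \<in> colon smul N" for g
    proof (rule colon_homog[OF sub])
      fix m assume "m \<in> homog MG"
      then obtain h where h: "m \<in> MG h" by (rule homog_E)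
      have "hdecomp MG (smul r m) (\<lambda>k. smul (c (k - h)) m)"
      proof (rule hdecomp_shift[OF c, where \<phi> = "\<lambda>g. g + h"])
        show "smul (a + b) m = smul a m + smul b m" for a b by (rule M.scale_left_distrib)
        show "smul a m \<in> MG (g + h)" if "a \<in> RG g" for g a using degM[OF that h] .
      qed (auto simp: algebra_simps)
      note hd = this
      have "smul r m \<in> N" using r unfolding colon_def by blast
      from comp_in[OF N this hd, of "g + h"] show "smul (c g) m \<in> N" by simp
    qed
    then have "hdecomp (\<lambda>g. RG g \<inter> colon smul N) r c" using c unfolding hdecomp_def by blast
    then show "\<exists>c. hdecomp (\<lambda>g. RG g \<inter> colon smul N) r c" by blast
  qed
  moreover have "idl (colon smul N)" by (rule colon_idl[OF sub])
  ultimately show ?thesis unfolding graded_ideal_def idl_def by simp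
qed

lemma graded_ideal_list:
  assumes "graded_ideal RG I" "x \<in> I"
  shows "\<exists>xs. set xs \<subseteq> homog RG \<inter> I \<and> x = sum_list xs"
  using R.graded_sub_list[of I x] assms graded_ideal_iff[of RG I] by simp

lemma graded_ideal_sub:
  assumes "graded_ideal RG I" "idl P" "\<And>x. x \<in> homog RG \<Longrightarrow> x \<in> I \<Longrightarrow> x \<in> P"
  shows "I \<subseteq> P"
proof
  fix x assume "x \<in> I"
  then obtain xs where xs: "set xs \<subseteq> homog RG \<inter> I" "x = sum_list xs" using graded_ideal_list assms(1) by blast
  have "set xs \<subseteq> P" using xs(1) assms(3) by blast
  then have "sum_list xs \<in> P" using assms(2) by (induction xs) (auto intro: idl_0 idl_add)
  then show "x \<in> P" using xs by simp
qed

lemma Gr_homog: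
  assumes I: "idl I" and a: "a \<in> homog RG"
  shows "a \<in> graded_radical RG I \<longleftrightarrow> a \<in> rad I"
proof -
  obtain g where g: "a \<in> RG g" using a by (rule homog_E)
  have s: "hdecomp RG a (\<lambda>h. if h = g then a else 0)"
    by (rule hdecomp_single) (auto intro: ids_zero[OF idsR] g)
  show ?thesis
  proof
    assume "a \<in> graded_radical RG I"
    then obtain c where c: "hdecomp RG a c" "\<forall>h. \<exists>n>0. c h ^ n \<in> I"
      unfolding graded_radical_def by blast
    have "c = (\<lambda>h. if h = g then a else 0)" using ids_unique[OF idsR c(1) s] .
    then have "c g = a" by simp
    moreover have "\<exists>n>0. c g ^ n \<in> I" using c(2) by blast
    ultimately show "a \<in> rad I" unfolding rad_def by simp
  next
    assume "a \<in> rad I"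
    then obtain n where n: "n > 0" "a ^ n \<in> I" unfolding rad_def by blast
    have "\<forall>h. \<exists>n>0. (if h = g then a else 0) ^ n \<in> I"
      using n idl_0[OF I] by (auto intro: exI[of _ 1])
    then show "a \<in> graded_radical RG I" using s unfolding graded_radical_def by blast
  qed
qed

lemma Gr_mono: "I \<subseteq> J \<Longrightarrow> graded_radical RG I \<subseteq> graded_radical RG J"
  unfolding graded_radical_def by blast

lemma ideal_sub_Gr:
  assumes "graded_ideal RG I" shows "I \<subseteq> graded_radical RG I"
proof
  fix x assume x: "x \<in> I"
  obtain c where c: "hdecomp RG x c" using ids_exists[OF idsR] by blast
  have "c g \<in> I" for g using R.comp_in[OF assms[unfolded graded_ideal_iff] x c] .
  then have "\<forall>g. \<exists>n>0. c g ^ n \<in> I" by (auto intro: exI[of _ 1])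
  then show "x \<in> graded_radical RG I" using c unfolding graded_radical_def by blast
qed

lemma Gr_sub_rad:
  assumes I: "idl I" shows "graded_radical RG I \<subseteq> rad I"
proof
  fix x assume "x \<in> graded_radical RG I"
  then obtain c where c: "hdecomp RG x c" "\<forall>h. \<exists>n>0. c h ^ n \<in> I"
    unfolding graded_radical_def by blast
  have "x = sum c {g. c g \<noteq> 0}" using c(1) unfolding hdecomp_def by blast
  also have "\<dots> \<in> rad I"
  proof (rule idl_sum[OF rad_idl[OF I]])
    fix g show "c g \<in> rad I" using c(2) unfolding rad_def by blast
  qed
  finally show "x \<in> rad I" .
qed

end

context gmod
begin

interpretation R: gmod "(*) :: 'r \<Rightarrow> 'r \<Rightarrow> 'r" RG RG by (rule ring_gmod)

lemma krull:
  assumes I: "graded_ideal RG I" and b: "b \<in> homog RG" and nb: "\<forall>n>0. b ^ n \<notin> I"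
  shows "\<exists>p. graded_prime_ideal RG p \<and> I \<subseteq> p \<and> b \<notin> p"
proof -
  define \<A> where "\<A> = {J. graded_ideal RG J \<and> I \<subseteq> J \<and> (\<forall>n>0. b ^ n \<notin> J)}"
  have IA: "I \<in> \<A>" using I nb unfolding \<A>_def by blast
  have "\<exists>P\<in>\<A>. \<forall>X\<in>\<A>. P \<subseteq> X \<longrightarrow> X = P"
  proof (rule subset_Zorn_nonempty)
    show "\<A> \<noteq> {}" using IA by blast
    fix C assume C: "C \<noteq> {}" "subset.chain \<A> C"
    have CA: "C \<subseteq> \<A>" and ch: "\<And>X Y. X \<in> C \<Longrightarrow> Y \<in> C \<Longrightarrow> X \<subseteq> Y \<or> Y \<subseteq> X"
      using C(2) unfolding subset_chain_def by blast+
    have gi: "graded_ideal RG J" if "J \<in> C" for J using CA that unfolding \<A>_def by blast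
    obtain J0 where J0: "J0 \<in> C" using C(1) by blast
    have "graded_ideal RG (\<Union>C)" unfolding graded_ideal_def
    proof (intro conjI ballI allI)
      show "0 \<in> \<Union>C" using gi[OF J0] J0 unfolding graded_ideal_def by blast
    next
      fix x y assume "x \<in> \<Union>C" "y \<in> \<Union>C"
      then obtain X Y where XY: "X \<in> C" "Y \<in> C" "x \<in> X" "y \<in> Y" by blast
      show "x + y \<in> \<Union>C"
      proof (cases "X \<subseteq> Y")
        case True then show ?thesis using gi[OF XY(2)] XY unfolding graded_ideal_def by blast
      next
        case False then have "Y \<subseteq> X" using ch[OF XY(1,2)] by blast
        then show ?thesis using gi[OF XY(1)] XY unfolding graded_ideal_def by blast
      qed
    next
      fix r x assume "x \<in> \<Union>C"
      then obtain X where "X \<in> C" "x \<in> X" by blast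
      then show "r * x \<in> \<Union>C" using gi unfolding graded_ideal_def by blast
    next
      show "graded_set RG (\<Union>C)" unfolding graded_set_def
      proof
        fix x assume "x \<in> \<Union>C"
        then obtain X where X: "X \<in> C" "x \<in> X" by blast
        then obtain c where "hdecomp (\<lambda>g. RG g \<inter> X) x c"
          using gi[OF X(1)] unfolding graded_ideal_def graded_set_def by blast
        then have "hdecomp (\<lambda>g. RG g \<inter> \<Union>C) x c" by (rule hdecomp_mono) (use X in blast)
        then show "\<exists>c. hdecomp (\<lambda>g. RG g \<inter> \<Union>C) x c" by blast
      qed
    qed
    moreover have "I \<subseteq> \<Union>C" using CA J0 unfolding \<A>_def by blast
    moreover have "\<forall>n>0. b ^ n \<notin> \<Union>C" using CA unfolding \<A>_def by blast
    ultimately show "\<Union>C \<in> \<A>" unfolding \<A>_def by blast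
  qed
  then obtain P where PA: "P \<in> \<A>" and Pmax: "\<And>X. X \<in> \<A> \<Longrightarrow> P \<subseteq> X \<Longrightarrow> X = P" by blast
  have Pg: "graded_ideal RG P" and IP: "I \<subseteq> P" and nbP: "\<forall>n>0. b ^ n \<notin> P"
    using PA unfolding \<A>_def by blast+
  have Pidl: "idl P" by (rule graded_ideal_idl[OF Pg])
  have Psub: "R.M.subspace P" using Pg graded_ideal_iff unfolding graded_submodule_def by blast
  have bP: "b \<notin> P" using nbP[rule_format, of 1] by simp
  have key: "\<exists>n>0. \<exists>k. b ^ n - k * z \<in> P" if z: "z \<in> homog RG" "z \<notin> P" for z
  proof -
    let ?Pz = "R.M.span (insert z P)"
    have gz: "graded_submodule (*) RG ?Pz"
    proof (rule R.graded_span)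
      fix w assume w: "w \<in> insert z P"
      show "\<exists>xs. set xs \<subseteq> homog RG \<inter> ?Pz \<and> w = sum_list xs"
      proof (cases "w = z")
        case True then show ?thesis using z R.M.span_superset[of "insert z P"]
          by (intro exI[of _ "[z]"]) auto
      next
        case False then have "w \<in> P" using w by blast
        then obtain xs where "set xs \<subseteq> homog RG \<inter> P" "w = sum_list xs"
          using graded_ideal_list[OF Pg] by blast
        moreover have "P \<subseteq> ?Pz" using R.M.span_superset[of "insert z P"] by blast
        ultimately show ?thesis by blast
      qed
    qed
    have "?Pz \<notin> \<A>"
    proof
      assume "?Pz \<in> \<A>"
      moreover have "P \<subseteq> ?Pz" using R.M.span_superset[of "insert z P"] by blast
      ultimately have "?Pz = P" using Pmax by blast
      moreover have "z \<in> ?Pz" using R.M.span_superset[of "insert z P"] by blast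
      ultimately show False using z by blast
    qed
    moreover have "graded_ideal RG ?Pz" using gz graded_ideal_iff by blast
    moreover have "I \<subseteq> ?Pz" using IP R.M.span_superset[of "insert z P"] by blast
    ultimately obtain n where n: "n > 0" "b ^ n \<in> ?Pz" unfolding \<A>_def by blast
    have eqP: "R.M.span P = P" by (rule R.graded_sub_span) (use Pg graded_ideal_iff in blast)
    obtain k where "b ^ n - k * z \<in> R.M.span P" using n(2) R.M.span_insert[of z P] by auto
    then have "b ^ n - k * z \<in> P" using eqP by blast
    then show ?thesis using n(1) by blast
  qed
  have prime: "x \<in> P \<or> y \<in> P" if xy: "x \<in> homog RG" "y \<in> homog RG" "x * y \<in> P" for x y
  proof (rule ccontr)
    assume "\<not> (x \<in> P \<or> y \<in> P)"
    then obtain n k m l where n: "n > 0" "b ^ n - k * x \<in> P" and m: "m > 0" "b ^ m - l * y \<in> P"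
      using key[OF xy(1)] key[OF xy(2)] by blast
    define j1 where "j1 = b ^ n - k * x"
    define j2 where "j2 = b ^ m - l * y"
    have e1: "b ^ n = j1 + k * x" unfolding j1_def by simp
    have e2: "b ^ m = j2 + l * y" unfolding j2_def by simp
    have "b ^ (n + m) = (j1 + k * x) * (j2 + l * y)" by (simp add: power_add e1 e2)
    also have "\<dots> = j1 * (j2 + l * y) + ((k * x) * j2 + (k * l) * (x * y))"
      by (simp add: algebra_simps del: R.M.scale_scale)
    also have "\<dots> \<in> P"
    proof -
      have P1: "j1 \<in> P" using n(2) unfolding j1_def .
      have P2: "j2 \<in> P" using m(2) unfolding j2_def .
      have t1: "j1 * (j2 + l * y) \<in> P" by (rule idl_mult2[OF Pidl P1])
      have t2: "(k * x) * j2 \<in> P" by (rule idl_mult[OF Pidl P2])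
      have t3: "(k * l) * (x * y) \<in> P" by (rule idl_mult[OF Pidl xy(3)])
      show ?thesis by (rule idl_add[OF Pidl t1 idl_add[OF Pidl t2 t3]])
    qed
    finally show False using nbP n m by simp
  qed
  have "P \<noteq> UNIV" using bP by blast
  then have "graded_prime_ideal RG P" using Pg prime unfolding graded_prime_ideal_def by blast
  then show ?thesis using IP bP by blast
qed

lemma qp_graded: "Q \<in> qp_Spec_g smul RG MG \<Longrightarrow> graded_submodule smul MG Q"
  unfolding qp_Spec_g_def graded_quasi_primary_def by blast

lemma qp_proper: "Q \<in> qp_Spec_g smul RG MG \<Longrightarrow> Q \<noteq> UNIV"
  unfolding qp_Spec_g_def graded_quasi_primary_def by blast

lemma graded_sub_subspace: "graded_submodule smul MG N \<Longrightarrow> M.subspace N"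
  unfolding graded_submodule_def by blast

lemma qp_prime:
  assumes Q: "Q \<in> qp_Spec_g smul RG MG" and a: "a \<in> homog RG" and b: "b \<in> homog RG"
    and ab: "a * b \<in> colon smul Q" and na: "a \<notin> rad (colon smul Q)"
  shows "b \<in> rad (colon smul Q)"
proof (rule ccontr)
  assume nb: "b \<notin> rad (colon smul Q)"
  have Qg: "graded_submodule smul MG Q" by (rule qp_graded[OF Q])
  have cg: "graded_ideal RG (colon smul Q)" by (rule colon_graded[OF Qg])
  have "\<forall>n>0. b ^ n \<notin> colon smul Q" using nb unfolding rad_def by blast
  then obtain p where p: "graded_prime_ideal RG p" "colon smul Q \<subseteq> p" "b \<notin> p"
    using krull[OF cg b] by blast
  have pf: "graded_primeful smul RG MG Q" using Q unfolding qp_Spec_g_def by blast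
  obtain P where P: "P \<in> Spec_g smul RG MG" "Q \<subseteq> P" "colon smul P = p"
    using pf p unfolding graded_primeful_def by blast
  have Pg: "graded_submodule smul MG P" using P(1) unfolding Spec_g_def graded_prime_submodule_def by blast
  have qpr: "\<forall>r\<in>homog RG. \<forall>m\<in>homog MG. smul r m \<in> Q \<longrightarrow>
          r \<in> graded_radical RG (colon smul Q) \<or> m \<in> graded_M_radical smul RG MG Q"
    using Q unfolding qp_Spec_g_def graded_quasi_primary_def by blast
  have "b \<in> colon smul P"
  proof (rule colon_homog[OF graded_sub_subspace[OF Pg]])
    fix m assume m: "m \<in> homog MG"
    have bm: "smul b m \<in> homog MG" by (rule homM_smul[OF b m])
    have "smul a (smul b m) \<in> Q" using ab unfolding colon_def by simp
    then have "a \<in> graded_radical RG (colon smul Q) \<or> smul b m \<in> graded_M_radical smul RG MG Q"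
      using qpr a bm by blast
    moreover have "a \<notin> graded_radical RG (colon smul Q)"
      using Gr_homog[OF graded_ideal_idl[OF cg] a] na by blast
    ultimately have "smul b m \<in> graded_M_radical smul RG MG Q" by blast
    then show "smul b m \<in> P" using P(1,2) unfolding graded_M_radical_def by blast
  qed
  then show False using P(3) p(3) by blast
qed

end

context gmod
begin

lemma Gr_not_sub:
  assumes "\<not> graded_radical RG I \<subseteq> graded_radical RG J"
  shows "\<exists>a\<in>homog RG. a \<in> I \<and> a \<notin> rad J"
proof -
  obtain x where x: "x \<in> graded_radical RG I" "x \<notin> graded_radical RG J" using assms by blast
  obtain c where c: "hdecomp RG x c" "\<forall>h. \<exists>n>0. c h ^ n \<in> I"
    using x(1) unfolding graded_radical_def by blast
  have "\<exists>g. \<forall>n>0. c g ^ n \<notin> J"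
  proof (rule ccontr)
    assume "\<not> (\<exists>g. \<forall>n>0. c g ^ n \<notin> J)"
    then have "\<forall>g. \<exists>n>0. c g ^ n \<in> J" by blast
    then have "x \<in> graded_radical RG J" using c(1) unfolding graded_radical_def by blast
    then show False using x(2) by blast
  qed
  then obtain g where g: "\<forall>n>0. c g ^ n \<notin> J" by blast
  obtain n where n: "n > 0" "c g ^ n \<in> I" using c(2) by blast
  have "c g \<in> homog RG" by (rule homog_I[of "c g" RG g, OF hdecomp_in[OF c(1)]])
  then have "c g ^ n \<in> homog RG" by (rule homR_pow[OF _ n(1)])
  moreover have "c g ^ n \<notin> rad J"
  proof
    assume "c g ^ n \<in> rad J"
    then have "c g \<in> rad J" using rad_rad n(1) by blast
    then show False using g unfolding rad_def by blast
  qed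
  ultimately show ?thesis using n(2) by blast
qed

lemma colon_inter: "colon smul (K \<inter> L) = colon smul K \<inter> colon smul L"
  unfolding colon_def by auto

lemma V_union:
  assumes Q: "Q \<in> qp_Spec_g smul RG MG" and K: "graded_submodule smul MG K"
    and L: "graded_submodule smul MG L" and QKL: "Q \<in> qp_V smul RG MG (K \<inter> L)"
  shows "Q \<in> qp_V smul RG MG K \<or> Q \<in> qp_V smul RG MG L"
proof (rule ccontr)
  assume "\<not> ?thesis"
  then have nK: "\<not> graded_radical RG (colon smul K) \<subseteq> graded_radical RG (colon smul Q)"
    and nL: "\<not> graded_radical RG (colon smul L) \<subseteq> graded_radical RG (colon smul Q)"
    using Q unfolding qp_V_def by blast+
  obtain a where a: "a \<in> homog RG" "a \<in> colon smul K" "a \<notin> rad (colon smul Q)"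
    using Gr_not_sub[OF nK] by blast
  obtain b where b: "b \<in> homog RG" "b \<in> colon smul L" "b \<notin> rad (colon smul Q)"
    using Gr_not_sub[OF nL] by blast
  have KL: "graded_submodule smul MG (K \<inter> L)" by (rule graded_inter[OF K L])
  have Qg: "graded_submodule smul MG Q" by (rule qp_graded[OF Q])
  have idlQ: "idl (colon smul Q)" by (rule graded_ideal_idl[OF colon_graded[OF Qg]])
  have abK: "a * b \<in> colon smul K" by (rule idl_mult2[OF colon_idl[OF graded_sub_subspace[OF K]] a(2)])
  have abL: "a * b \<in> colon smul L" by (rule idl_mult[OF colon_idl[OF graded_sub_subspace[OF L]] b(2)])
  have "a * b \<in> colon smul (K \<inter> L)" unfolding colon_inter using abK abL by blast
  then have "a * b \<in> graded_radical RG (colon smul (K \<inter> L))"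
    using ideal_sub_Gr[OF colon_graded[OF KL]] by blast
  then have "a * b \<in> graded_radical RG (colon smul Q)" using QKL unfolding qp_V_def by blast
  then have "a * b \<in> rad (colon smul Q)" using Gr_homog[OF idlQ homR_mult[OF a(1) b(1)]] by blast
  then obtain k where k: "k > 0" "(a * b) ^ k \<in> colon smul Q" unfolding rad_def by blast
  have ak: "a ^ k \<in> homog RG" by (rule homR_pow[OF a(1) k(1)])
  have bk: "b ^ k \<in> homog RG" by (rule homR_pow[OF b(1) k(1)])
  have "a ^ k * b ^ k \<in> colon smul Q" using k(2) by (simp add: power_mult_distrib)
  moreover have "a ^ k \<notin> rad (colon smul Q)" using a(3) rad_rad[of a k] k(1) by blast
  ultimately have "b ^ k \<in> rad (colon smul Q)" by (rule qp_prime[OF Q ak bk])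
  then show False using b(3) rad_rad[of b k] k(1) by blast
qed

lemma V_Inter:
  assumes fg: "finitely_generated smul" and KK: "\<And>K. K \<in> \<K> \<Longrightarrow> graded_submodule smul MG K"
  shows "\<exists>K'. graded_submodule smul MG K' \<and>
    qp_V smul RG MG K' = {Q \<in> qp_Spec_g smul RG MG. \<forall>K\<in>\<K>. Q \<in> qp_V smul RG MG K}"
proof -
  define H where "H = {smul r m | r m. r \<in> homog RG \<and> m \<in> homog MG \<and> (\<exists>K\<in>\<K>. r \<in> colon smul K)}"
  define K' where "K' = M.span H"
  have K'g: "graded_submodule smul MG K'" unfolding K'_def
  proof (rule graded_span)
    fix x assume "x \<in> H"
    then have "x \<in> homog MG" unfolding H_def using homM_smul by blast
    moreover have "x \<in> M.span H" using \<open>x \<in> H\<close> M.span_superset by blast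
    ultimately show "\<exists>xs. set xs \<subseteq> homog MG \<inter> M.span H \<and> x = sum_list xs"
      by (intro exI[of _ "[x]"]) auto
  qed
  have colsub: "colon smul K \<subseteq> colon smul K'" if K: "K \<in> \<K>" for K
  proof
    fix r assume r: "r \<in> colon smul K"
    obtain rs where rs: "set rs \<subseteq> homog RG \<inter> colon smul K" "r = sum_list rs"
      using graded_ideal_list[OF colon_graded[OF KK[OF K]] r] by blast
    show "r \<in> colon smul K'" unfolding colon_def
    proof (intro CollectI allI)
      fix m
      obtain ms where ms: "set ms \<subseteq> homog MG" "m = sum_list ms" using decompM_list by blast
      have "smul r m = sum_list (concat (map (\<lambda>a. map (smul a) ms) rs))"
        using rs ms M.scale_sum_list_both by simp
      also have "\<dots> \<in> K'" unfolding K'_def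
      proof (rule M.sum_list_in_subspace[OF M.subspace_span])
        show "set (concat (map (\<lambda>a. map (smul a) ms) rs)) \<subseteq> M.span H"
        proof
          fix z assume "z \<in> set (concat (map (\<lambda>a. map (smul a) ms) rs))"
          then obtain a y where ay: "a \<in> set rs" "y \<in> set ms" "z = smul a y" by auto
          then have "z \<in> H" unfolding H_def using rs(1) ms(1) K by blast
          then show "z \<in> M.span H" using M.span_superset by blast
        qed
      qed
      finally show "smul r m \<in> K'" .
    qed
  qed
  have "qp_V smul RG MG K' = {Q \<in> qp_Spec_g smul RG MG. \<forall>K\<in>\<K>. Q \<in> qp_V smul RG MG K}"
  proof (intro equalityI subsetI)
    fix Q assume Q: "Q \<in> qp_V smul RG MG K'"
    then have "\<forall>K\<in>\<K>. Q \<in> qp_V smul RG MG K"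
      using colsub Gr_mono unfolding qp_V_def by blast
    then show "Q \<in> {Q \<in> qp_Spec_g smul RG MG. \<forall>K\<in>\<K>. Q \<in> qp_V smul RG MG K}"
      using Q unfolding qp_V_def by blast
  next
    fix Q assume "Q \<in> {Q \<in> qp_Spec_g smul RG MG. \<forall>K\<in>\<K>. Q \<in> qp_V smul RG MG K}"
    then have Q: "Q \<in> qp_Spec_g smul RG MG"
      and QK: "\<And>K. K \<in> \<K> \<Longrightarrow> graded_radical RG (colon smul K) \<subseteq> graded_radical RG (colon smul Q)"
      unfolding qp_V_def by blast+
    have Qg: "graded_submodule smul MG Q" by (rule qp_graded[OF Q])
    have idlQ: "idl (colon smul Q)" by (rule graded_ideal_idl[OF colon_graded[OF Qg]])
    define J where "J = rad (colon smul Q)"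
    have J: "idl J" unfolding J_def by (rule rad_idl[OF idlQ])
    obtain S where S: "finite S" "M.span S = UNIV" using fg unfolding finitely_generated_def by blast
    have HJ: "H \<subseteq> {0} \<union> {smul j m' | j m'. j \<in> J}"
    proof
      fix z assume "z \<in> H"
      then obtain r m K where z: "z = smul r m" "r \<in> homog RG" "K \<in> \<K>" "r \<in> colon smul K"
        unfolding H_def by blast
      have "r \<in> graded_radical RG (colon smul K)"
        using ideal_sub_Gr[OF colon_graded[OF KK[OF z(3)]]] z(4) by blast
      then have "r \<in> graded_radical RG (colon smul Q)" using QK[OF z(3)] by blast
      then have "r \<in> J" unfolding J_def using Gr_homog[OF idlQ z(2)] by blast
      then show "z \<in> {0} \<union> {smul j m' | j m'. j \<in> J}" using z(1) by blast
    qed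
    have "graded_radical RG (colon smul K') \<subseteq> graded_radical RG (colon smul Q)"
    proof
      fix x assume "x \<in> graded_radical RG (colon smul K')"
      then obtain c where c: "hdecomp RG x c" "\<forall>h. \<exists>n>0. c h ^ n \<in> colon smul K'"
        unfolding graded_radical_def by blast
      have "\<exists>N>0. c g ^ N \<in> colon smul Q" for g
      proof -
        obtain n where n: "n > 0" "c g ^ n \<in> colon smul K'" using c(2) by blast
        define y where "y = c g ^ n"
        have ty: "smul y m \<in> M.span ({0} \<union> {smul j m' | j m'. j \<in> J})" for m
        proof -
          have "smul y m \<in> K'" using n(2) unfolding y_def colon_def by blast
          also have "K' \<subseteq> M.span ({0} \<union> {smul j m' | j m'. j \<in> J})"
            unfolding K'_def by (rule M.span_mono[OF HJ])
          finally show ?thesis .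
        qed
        obtain N a where N: "N > 0" "a \<in> J" "\<forall>m. smul (y ^ N + a) m \<in> {0}"
          using M.det_trick[OF S M.subspace_single_0 J ty] by blast
        have "y ^ N + a \<in> colon smul Q"
          using N(3) M.subspace_0[OF graded_sub_subspace[OF Qg]] unfolding colon_def by simp
        then have "y ^ N + a \<in> J" unfolding J_def using rad_sub by blast
        then have "(y ^ N + a) - a \<in> J" using idl_diff[OF J _ N(2)] by blast
        then have "y ^ N \<in> J" by simp
        then obtain k where k: "k > 0" "(y ^ N) ^ k \<in> colon smul Q" unfolding J_def rad_def by blast
        have "c g ^ (n * N * k) \<in> colon smul Q" using k(2) unfolding y_def by (simp add: power_mult)
        moreover have "n * N * k > 0" using n(1) N(1) k(1) by simp
        ultimately show ?thesis by blast
      qed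
      then show "x \<in> graded_radical RG (colon smul Q)" using c(1) unfolding graded_radical_def by blast
    qed
    then show "Q \<in> qp_V smul RG MG K'" using Q unfolding qp_V_def by blast
  qed
  then show ?thesis using K'g by blast
qed

lemma Gr_UNIV: "graded_radical RG UNIV = UNIV"
proof -
  have "x \<in> graded_radical RG UNIV" for x
  proof -
    obtain c where "hdecomp RG x c" using ids_exists[OF idsR] by blast
    then show ?thesis unfolding graded_radical_def by (auto intro: exI[of _ 1])
  qed
  then show ?thesis by blast
qed

lemma V_UNIV: "qp_V smul RG MG UNIV = {}"
proof (rule ccontr)
  assume "qp_V smul RG MG UNIV \<noteq> {}"
  then obtain Q where Q: "Q \<in> qp_Spec_g smul RG MG"
    "graded_radical RG (colon smul UNIV) \<subseteq> graded_radical RG (colon smul Q)"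
    unfolding qp_V_def by blast
  have "colon smul UNIV = UNIV" unfolding colon_def by simp
  then have "graded_radical RG (colon smul UNIV) = UNIV" using Gr_UNIV by simp
  then have "1 \<in> graded_radical RG (colon smul Q)" using Q(2) by blast
  have Qg: "graded_submodule smul MG Q" by (rule qp_graded[OF Q(1)])
  have idlQ: "idl (colon smul Q)" by (rule graded_ideal_idl[OF colon_graded[OF Qg]])
  have "1 \<in> rad (colon smul Q)" using Gr_sub_rad[OF idlQ] \<open>1 \<in> graded_radical RG (colon smul Q)\<close> by blast
  then have "1 \<in> colon smul Q" unfolding rad_def by simp
  then have "smul 1 m \<in> Q" for m unfolding colon_def by blast
  then have "m \<in> Q" for m by simp
  then have "Q = UNIV" by blast
  then show False using qp_proper[OF Q(1)] by blast
qed

definition qz_open :: "'m set set \<Rightarrow> bool" where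
  "qz_open U \<longleftrightarrow> (\<exists>K. graded_submodule smul MG K \<and> U = qp_Spec_g smul RG MG - qp_V smul RG MG K)"

lemma qz_istopology:
  assumes fg: "finitely_generated smul"
  shows "istopology qz_open"
  unfolding istopology_def
proof (intro conjI allI impI)
  fix S T assume "qz_open S" "qz_open T"
  then obtain K L where K: "graded_submodule smul MG K" "S = qp_Spec_g smul RG MG - qp_V smul RG MG K"
    and L: "graded_submodule smul MG L" "T = qp_Spec_g smul RG MG - qp_V smul RG MG L"
    unfolding qz_open_def by blast
  have "S \<inter> T = qp_Spec_g smul RG MG - qp_V smul RG MG (K \<inter> L)"
  proof (intro equalityI subsetI)
    fix Q assume "Q \<in> S \<inter> T"
    then show "Q \<in> qp_Spec_g smul RG MG - qp_V smul RG MG (K \<inter> L)"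
      using K(2) L(2) V_union[OF _ K(1) L(1)] by blast
  next
    fix Q assume Q: "Q \<in> qp_Spec_g smul RG MG - qp_V smul RG MG (K \<inter> L)"
    have "colon smul (K \<inter> L) \<subseteq> colon smul K" "colon smul (K \<inter> L) \<subseteq> colon smul L"
      unfolding colon_inter by blast+
    then have "graded_radical RG (colon smul (K \<inter> L)) \<subseteq> graded_radical RG (colon smul K)"
      "graded_radical RG (colon smul (K \<inter> L)) \<subseteq> graded_radical RG (colon smul L)"
      using Gr_mono by blast+
    then show "Q \<in> S \<inter> T" using Q K(2) L(2) unfolding qp_V_def by blast
  qed
  then show "qz_open (S \<inter> T)" unfolding qz_open_def using graded_inter[OF K(1) L(1)] by blast
next
  fix \<U> assume U: "\<forall>U\<in>\<U>. qz_open U"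
  define \<K> where "\<K> = {K. graded_submodule smul MG K \<and> qp_Spec_g smul RG MG - qp_V smul RG MG K \<in> \<U>}"
  obtain K' where K': "graded_submodule smul MG K'"
    "qp_V smul RG MG K' = {Q \<in> qp_Spec_g smul RG MG. \<forall>K\<in>\<K>. Q \<in> qp_V smul RG MG K}"
    using V_Inter[OF fg, of \<K>] unfolding \<K>_def by blast
  have "\<Union>\<U> = qp_Spec_g smul RG MG - qp_V smul RG MG K'"
  proof (intro equalityI subsetI)
    fix Q assume "Q \<in> \<Union>\<U>"
    then obtain U0 where U0: "U0 \<in> \<U>" "Q \<in> U0" by blast
    then obtain K where K: "graded_submodule smul MG K" "U0 = qp_Spec_g smul RG MG - qp_V smul RG MG K"
      using U unfolding qz_open_def by blast
    then have "K \<in> \<K>" unfolding \<K>_def using U0 by blast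
    then show "Q \<in> qp_Spec_g smul RG MG - qp_V smul RG MG K'" using K' U0 K by blast
  next
    fix Q assume Q: "Q \<in> qp_Spec_g smul RG MG - qp_V smul RG MG K'"
    then obtain K where "K \<in> \<K>" "Q \<notin> qp_V smul RG MG K" using K'(2) by blast
    then show "Q \<in> \<Union>\<U>" using Q unfolding \<K>_def by blast
  qed
  then show "qz_open (\<Union>\<U>)" unfolding qz_open_def using K'(1) by blast
qed

lemma openin_qz:
  assumes fg: "finitely_generated smul"
  shows "openin (quasi_zariski smul RG MG) = qz_open"
proof -
  have "quasi_zariski smul RG MG = topology qz_open"
    unfolding quasi_zariski_def qz_open_def[abs_def] ..
  then show ?thesis using topology_inverse'[OF qz_istopology[OF fg]] by simp
qed

lemma topspace_qz:
  assumes fg: "finitely_generated smul"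
  shows "topspace (quasi_zariski smul RG MG) = qp_Spec_g smul RG MG"
proof -
  have "qz_open (qp_Spec_g smul RG MG)" unfolding qz_open_def
    using graded_UNIV V_UNIV by (intro exI[of _ UNIV]) simp
  moreover have "U \<subseteq> qp_Spec_g smul RG MG" if "qz_open U" for U
    using that unfolding qz_open_def by blast
  ultimately show ?thesis unfolding topspace_def openin_qz[OF fg] by blast
qed

end

lemma pprime_pow:
  fixes RG :: "'g \<Rightarrow> 'r::comm_ring_1 set"
  assumes pr: "\<forall>a\<in>homog RG. \<forall>b\<in>homog RG. a * b \<in> p \<longrightarrow> a \<in> p \<or> b \<in> p"
    and hp: "\<And>a b. a \<in> homog RG \<Longrightarrow> b \<in> homog RG \<Longrightarrow> a * b \<in> homog RG"
    and t: "t \<in> homog RG"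
  shows "n > 0 \<Longrightarrow> t ^ n \<in> p \<Longrightarrow> t \<in> p"
proof (induction n)
  case 0 then show ?case by simp
next
  case (Suc n)
  show ?case
  proof (cases "n = 0")
    case True then show ?thesis using Suc by simp
  next
    case False
    have tn: "t ^ n \<in> homog RG"
    proof -
      have "t ^ k \<in> homog RG" if "k > 0" for k using that
      proof (induction k)
        case (Suc k) then show ?case using t hp by (cases "k = 0") auto
      qed simp
      then show ?thesis using False by simp
    qed
    have "t * t ^ n \<in> p" using Suc.prems by simp
    then have "t \<in> p \<or> t ^ n \<in> p" using pr t tn by blast
    then show ?thesis using Suc.IH False by blast
  qed
qed

context gmod
begin

lemma max_props:
  assumes "K \<in> Max_g smul MG"
  shows "graded_submodule smul MG K" "K \<noteq> UNIV"
    "\<And>N. graded_submodule smul MG N \<Longrightarrow> K \<subseteq> N \<Longrightarrow> N = K \<or> N = UNIV"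
  using assms unfolding Max_g_def by blast+

lemma preimage_subspace:
  assumes K: "M.subspace K" shows "M.subspace {y. smul r y \<in> K}"
  unfolding M.subspace_def
proof (intro conjI ballI allI)
  show "0 \<in> {y. smul r y \<in> K}" using M.subspace_0[OF K] by simp
  fix x y assume "x \<in> {y. smul r y \<in> K}" "y \<in> {y. smul r y \<in> K}"
  then show "x + y \<in> {y. smul r y \<in> K}" using M.subspace_add[OF K] by (simp add: M.scale_right_distrib)
next
  fix c x assume "x \<in> {y. smul r y \<in> K}"
  then have "smul r x \<in> K" by simp
  then have "smul c (smul r x) \<in> K" by (rule M.subspace_scale[OF K])
  then show "smul c x \<in> {y. smul r y \<in> K}" by (simp add: mult.commute)
qed

lemma max_prime:
  assumes K: "K \<in> Max_g smul MG"
  shows "graded_prime_submodule smul RG MG K"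
proof -
  note Kp = max_props[OF K]
  have "r \<in> colon smul K"
    if r: "r \<in> homog RG" and m: "m \<in> homog MG" and rm: "smul r m \<in> K" and mK: "m \<notin> K" for r m
  proof -
    let ?N = "M.span (insert m K)"
    have Ng: "graded_submodule smul MG ?N"
    proof (rule graded_span)
      fix w assume w: "w \<in> insert m K"
      show "\<exists>xs. set xs \<subseteq> homog MG \<inter> ?N \<and> w = sum_list xs"
      proof (cases "w = m")
        case True then show ?thesis using m M.span_superset[of "insert m K"]
          by (intro exI[of _ "[m]"]) auto
      next
        case False then have "w \<in> K" using w by blast
        then obtain xs where "set xs \<subseteq> homog MG \<inter> K" "w = sum_list xs"
          using graded_sub_list[OF Kp(1)] by blast
        moreover have "K \<subseteq> ?N" using M.span_superset[of "insert m K"] by blast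
        ultimately show ?thesis by blast
      qed
    qed
    have "K \<subseteq> ?N" using M.span_superset[of "insert m K"] by blast
    moreover have "m \<in> ?N" using M.span_superset[of "insert m K"] by blast
    ultimately have NU: "?N = UNIV" using Kp(3)[OF Ng] mK by blast
    have sub: "M.subspace {y. smul r y \<in> K}" by (rule preimage_subspace[OF graded_sub_subspace[OF Kp(1)]])
    have "smul r y \<in> K" for y
    proof -
      have "y \<in> ?N" using NU by blast
      then have "y \<in> {y. smul r y \<in> K}"
        by (rule M.span_subspace_induct[OF _ sub]) (use rm M.subspace_scale[OF graded_sub_subspace[OF Kp(1)]] in auto)
      then show ?thesis by simp
    qed
    then show ?thesis unfolding colon_def by blast
  qed
  then show ?thesis unfolding graded_prime_submodule_def using Kp(1,2) by blast
qed

lemma ext_graded: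
  assumes J: "graded_ideal RG J" and K: "graded_submodule smul MG K"
  shows "graded_submodule smul MG (M.span (K \<union> {smul j m | j m. j \<in> J}))"
proof (rule graded_span)
  let ?X = "K \<union> {smul j m | j m. j \<in> J}"
  fix w assume w: "w \<in> ?X"
  have XN: "?X \<subseteq> M.span ?X" by (rule M.span_superset)
  show "\<exists>xs. set xs \<subseteq> homog MG \<inter> M.span ?X \<and> w = sum_list xs"
  proof (cases "w \<in> K")
    case True
    then obtain xs where "set xs \<subseteq> homog MG \<inter> K" "w = sum_list xs"
      using graded_sub_list[OF K] by blast
    then show ?thesis using XN by blast
  next
    case False
    then obtain j m where jm: "j \<in> J" "w = smul j m" using w by blast
    obtain js where js: "set js \<subseteq> homog RG \<inter> J" "j = sum_list js" using graded_ideal_list[OF J jm(1)] by blast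
    obtain ms where ms: "set ms \<subseteq> homog MG" "m = sum_list ms" using decompM_list by blast
    have "w = sum_list (concat (map (\<lambda>a. map (smul a) ms) js))" using jm js ms M.scale_sum_list_both by simp
    moreover have "set (concat (map (\<lambda>a. map (smul a) ms) js)) \<subseteq> homog MG \<inter> M.span ?X"
    proof
      fix z assume "z \<in> set (concat (map (\<lambda>a. map (smul a) ms) js))"
      then obtain a y where ay: "a \<in> set js" "y \<in> set ms" "z = smul a y" by auto
      then have "z \<in> homog MG" using js(1) ms(1) homM_smul by blast
      moreover have "z \<in> ?X" using ay js(1) by blast
      ultimately show "z \<in> homog MG \<inter> M.span ?X" using XN by blast
    qed
    ultimately show ?thesis by blast
  qed
qed

lemma colon_UNIV_iff: "colon smul N = UNIV \<Longrightarrow> N = UNIV"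
proof -
  assume "colon smul N = UNIV"
  then have "smul 1 m \<in> N" for m unfolding colon_def by blast
  then have "m \<in> N" for m by simp
  then show "N = UNIV" by blast
qed

lemma idl_one: "idl p \<Longrightarrow> 1 \<in> p \<Longrightarrow> p = UNIV"
proof -
  assume "idl p" "1 \<in> p"
  then have "x * 1 \<in> p" for x using idl_mult by blast
  then show "p = UNIV" by auto
qed

lemma colon_max:
  assumes fg: "finitely_generated smul" and K: "K \<in> Max_g smul MG"
    and p: "graded_ideal RG p" "p \<noteq> UNIV" "colon smul K \<subseteq> p"
  shows "p = colon smul K"
proof (rule ccontr)
  assume "p \<noteq> colon smul K"
  then obtain r where r: "r \<in> p" "r \<notin> colon smul K" using p(3) by blast
  then obtain m where m: "smul r m \<notin> K" unfolding colon_def by blast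
  note Kp = max_props[OF K]
  let ?N = "M.span (K \<union> {smul j m | j m. j \<in> p})"
  have Ng: "graded_submodule smul MG ?N" by (rule ext_graded[OF p(1) Kp(1)])
  have "K \<subseteq> ?N" using M.span_superset[of "K \<union> {smul j m | j m. j \<in> p}"] by blast
  moreover have "smul r m \<in> ?N" using M.span_superset[of "K \<union> {smul j m | j m. j \<in> p}"] r(1) by blast
  ultimately have NU: "?N = UNIV" using Kp(3)[OF Ng] m by blast
  obtain S where S: "finite S" "M.span S = UNIV" using fg unfolding finitely_generated_def by blast
  have pidl: "idl p" by (rule graded_ideal_idl[OF p(1)])
  have "smul 1 y \<in> ?N" for y using NU by simp
  then obtain n a where na: "n > 0" "a \<in> p" "\<forall>y. smul (1 ^ n + a) y \<in> K"
    using M.det_trick[OF S graded_sub_subspace[OF Kp(1)] pidl] by blast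
  then have "1 + a \<in> colon smul K" unfolding colon_def by simp
  then have "1 + a \<in> p" using p(3) by blast
  then have "(1 + a) - a \<in> p" using idl_diff[OF pidl _ na(2)] by blast
  then have "p = UNIV" using idl_one[OF pidl] by simp
  then show False using p(2) by blast
qed

lemma prime_qp0:
  assumes P: "graded_prime_submodule smul RG MG P"
  shows "graded_quasi_primary smul RG MG P"
proof -
  have Pg: "graded_submodule smul MG P" and Pn: "P \<noteq> UNIV"
    and pr: "\<forall>r\<in>homog RG. \<forall>m\<in>homog MG. smul r m \<in> P \<longrightarrow> m \<in> P \<or> r \<in> colon smul P"
    using P unfolding graded_prime_submodule_def by blast+
  have "r \<in> graded_radical RG (colon smul P) \<or> m \<in> graded_M_radical smul RG MG P"
    if "r \<in> homog RG" "m \<in> homog MG" "smul r m \<in> P" for r m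
  proof -
    have "m \<in> P \<or> r \<in> colon smul P" using pr that by blast
    moreover have "m \<in> graded_M_radical smul RG MG P" if "m \<in> P"
      using that unfolding graded_M_radical_def by blast
    moreover have "r \<in> graded_radical RG (colon smul P)" if "r \<in> colon smul P"
      using that ideal_sub_Gr[OF colon_graded[OF Pg]] by blast
    ultimately show ?thesis by blast
  qed
  then show ?thesis unfolding graded_quasi_primary_def using Pg Pn by blast
qed

lemma max_qp:
  assumes fg: "finitely_generated smul" and K: "K \<in> Max_g smul MG"
  shows "K \<in> qp_Spec_g smul RG MG"
proof -
  have Kpr: "graded_prime_submodule smul RG MG K" by (rule max_prime[OF K])
  have "graded_primeful smul RG MG K" unfolding graded_primeful_def
  proof (intro allI impI)
    fix p assume p: "graded_prime_ideal RG p \<and> colon smul K \<subseteq> p"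
    then have "p = colon smul K" using colon_max[OF fg K] unfolding graded_prime_ideal_def by blast
    then show "\<exists>P\<in>Spec_g smul RG MG. K \<subseteq> P \<and> colon smul P = p"
      using Kpr unfolding Spec_g_def by blast
  qed
  then show ?thesis unfolding qp_Spec_g_def using prime_qp0[OF Kpr] by blast
qed

lemma prime_colon:
  assumes P: "graded_prime_submodule smul RG MG P" and a: "a \<in> homog RG" and b: "b \<in> homog RG"
    and ab: "a * b \<in> colon smul P"
  shows "a \<in> colon smul P \<or> b \<in> colon smul P"
proof (rule ccontr)
  assume "\<not> ?thesis"
  then have na: "a \<notin> colon smul P" and nb: "b \<notin> colon smul P" by blast+
  have Pg: "graded_submodule smul MG P"
    and pr: "\<forall>r\<in>homog RG. \<forall>m\<in>homog MG. smul r m \<in> P \<longrightarrow> m \<in> P \<or> r \<in> colon smul P"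
    using P unfolding graded_prime_submodule_def by blast+
  obtain m where m: "m \<in> homog MG" "smul b m \<notin> P"
    using colon_homog[OF graded_sub_subspace[OF Pg], of b] nb by blast
  have "smul a (smul b m) \<in> P" using ab unfolding colon_def by simp
  then show False using pr a homM_smul[OF b m(1)] m(2) na by blast
qed

lemma prime_colon_pow:
  assumes P: "graded_prime_submodule smul RG MG P" and t: "t \<in> homog RG" and n: "n > 0"
    and tn: "t ^ n \<in> colon smul P"
  shows "t \<in> colon smul P"
proof -
  have pr: "\<forall>a\<in>homog RG. \<forall>b\<in>homog RG. a * b \<in> colon smul P \<longrightarrow> a \<in> colon smul P \<or> b \<in> colon smul P"
    using prime_colon[OF P] by blast
  show ?thesis by (rule pprime_pow[OF pr homR_mult t n tn])
qed

lemma exists_max: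
  assumes fg: "finitely_generated smul" and Q: "graded_submodule smul MG Q" "Q \<noteq> UNIV"
  shows "\<exists>K\<in>Max_g smul MG. Q \<subseteq> K"
proof -
  obtain S where S: "finite S" "M.span S = UNIV" using fg unfolding finitely_generated_def by blast
  define \<A> where "\<A> = {N. graded_submodule smul MG N \<and> N \<noteq> UNIV \<and> Q \<subseteq> N}"
  have QA: "Q \<in> \<A>" using Q unfolding \<A>_def by blast
  have "\<exists>P\<in>\<A>. \<forall>X\<in>\<A>. P \<subseteq> X \<longrightarrow> X = P"
  proof (rule subset_Zorn_nonempty)
    show "\<A> \<noteq> {}" using QA by blast
    fix C assume C: "C \<noteq> {}" "subset.chain \<A> C"
    have CA: "C \<subseteq> \<A>" and ch: "\<And>X Y. X \<in> C \<Longrightarrow> Y \<in> C \<Longrightarrow> X \<subseteq> Y \<or> Y \<subseteq> X"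
      using C(2) unfolding subset_chain_def by blast+
    have gi: "graded_submodule smul MG N" if "N \<in> C" for N using CA that unfolding \<A>_def by blast
    have sub: "M.subspace N" if "N \<in> C" for N using graded_sub_subspace[OF gi[OF that]] .
    obtain J0 where J0: "J0 \<in> C" using C(1) by blast
    have Usub: "M.subspace (\<Union>C)" unfolding M.subspace_def
    proof (intro conjI ballI allI)
      show "0 \<in> \<Union>C" using M.subspace_0[OF sub[OF J0]] J0 by blast
    next
      fix x y assume "x \<in> \<Union>C" "y \<in> \<Union>C"
      then obtain X Y where XY: "X \<in> C" "Y \<in> C" "x \<in> X" "y \<in> Y" by blast
      show "x + y \<in> \<Union>C"
      proof (cases "X \<subseteq> Y")
        case True then show ?thesis using M.subspace_add[OF sub[OF XY(2)]] XY by blast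
      next
        case False then have "Y \<subseteq> X" using ch[OF XY(1,2)] by blast
        then show ?thesis using M.subspace_add[OF sub[OF XY(1)]] XY by blast
      qed
    next
      fix c x assume "x \<in> \<Union>C"
      then obtain X where "X \<in> C" "x \<in> X" by blast
      then show "smul c x \<in> \<Union>C" using M.subspace_scale[OF sub] by blast
    qed
    have "graded_submodule smul MG (\<Union>C)"
    proof (rule graded_intro[OF Usub])
      fix x assume "x \<in> \<Union>C"
      then obtain X where X: "X \<in> C" "x \<in> X" by blast
      then obtain xs where "set xs \<subseteq> homog MG \<inter> X" "x = sum_list xs"
        using graded_sub_list[OF gi[OF X(1)]] by blast
      then show "\<exists>xs. set xs \<subseteq> homog MG \<inter> \<Union>C \<and> x = sum_list xs" using X by blast
    qed
    moreover have "Q \<subseteq> \<Union>C" using CA J0 unfolding \<A>_def by blast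
    moreover have "\<Union>C \<noteq> UNIV"
    proof
      assume U: "\<Union>C = UNIV"
      have "\<exists>N\<in>C. T \<subseteq> N" if "finite T" for T using that
      proof (induction T rule: finite_induct)
        case empty then show ?case using J0 by blast
      next
        case (insert s T)
        then obtain N1 where N1: "N1 \<in> C" "T \<subseteq> N1" by blast
        have "s \<in> \<Union>C" using U by simp
        then obtain N2 where N2: "N2 \<in> C" "s \<in> N2" by (rule UnionE)
        show ?case
        proof (cases "N1 \<subseteq> N2")
          case True then show ?thesis using N1 N2 by blast
        next
          case False then have "N2 \<subseteq> N1" using ch[OF N1(1) N2(1)] by blast
          then show ?thesis using N1 N2 by blast
        qed
      qed
      then obtain N where N: "N \<in> C" "S \<subseteq> N" using S(1) by blast
      have "M.span S \<subseteq> N" by (rule M.span_minimal[OF N(2) sub[OF N(1)]])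
      then have "N = UNIV" using S(2) by (simp add: top_le)
      then show False using CA N(1) unfolding \<A>_def by blast
    qed
    ultimately show "\<Union>C \<in> \<A>" unfolding \<A>_def by blast
  qed
  then obtain K where KA: "K \<in> \<A>" and Kmax: "\<And>X. X \<in> \<A> \<Longrightarrow> K \<subseteq> X \<Longrightarrow> X = K" by blast
  have "K \<in> Max_g smul MG" unfolding Max_g_def
  proof (intro CollectI conjI allI impI)
    show "graded_submodule smul MG K" "K \<noteq> UNIV" using KA unfolding \<A>_def by blast+
    fix N assume N: "graded_submodule smul MG N \<and> K \<subseteq> N"
    show "N = K \<or> N = UNIV"
    proof (cases "N = UNIV")
      case False
      then have "N \<in> \<A>" using N KA unfolding \<A>_def by blast
      then show ?thesis using Kmax N by blast
    qed simp
  qed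
  then show ?thesis using KA unfolding \<A>_def by blast
qed

end

context gmod
begin

lemma graded_ideal_UNIV: "graded_ideal RG UNIV"
proof -
  interpret R: gmod "(*) :: 'r \<Rightarrow> 'r \<Rightarrow> 'r" RG RG by (rule ring_gmod)
  show ?thesis using R.graded_UNIV graded_ideal_iff by blast
qed

lemma lu:
  assumes fg: "finitely_generated smul" and K: "graded_submodule smul MG K"
    and p: "graded_prime_ideal RG p" and Kp: "colon smul K \<subseteq> p"
  shows "\<exists>P\<in>Spec_g smul RG MG. K \<subseteq> P \<and> colon smul P = p"
proof -
  have pg: "graded_ideal RG p" and pn: "p \<noteq> UNIV"
    and pr: "\<forall>a\<in>homog RG. \<forall>b\<in>homog RG. a * b \<in> p \<longrightarrow> a \<in> p \<or> b \<in> p"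
    using p unfolding graded_prime_ideal_def by blast+
  have pidl: "idl p" by (rule graded_ideal_idl[OF pg])
  define N where "N = M.span (K \<union> {smul j m | j m. j \<in> p})"
  have Ng: "graded_submodule smul MG N" unfolding N_def by (rule ext_graded[OF pg K])
  have Nsub: "M.subspace N" by (rule graded_sub_subspace[OF Ng])
  have KN: "K \<subseteq> N" unfolding N_def using M.span_superset by blast
  have genN: "smul j m \<in> N" if "j \<in> p" for j m
    unfolding N_def using that M.span_superset[of "K \<union> {smul j m | j m. j \<in> p}"] by blast
  have hm: "s * t \<in> homog RG \<and> s * t \<notin> p"
    if "s \<in> homog RG" "s \<notin> p" "t \<in> homog RG" "t \<notin> p" for s t
    using that pr homR_mult by blast
  obtain s0 where s0: "s0 \<in> homog RG" "s0 \<notin> p"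
  proof -
    have "\<exists>s0. s0 \<in> homog RG \<and> s0 \<notin> p"
    proof (rule ccontr)
      assume "\<not> ?thesis"
      then have "UNIV \<subseteq> p" using graded_ideal_sub[OF graded_ideal_UNIV pidl] by blast
      then show False using pn by blast
    qed
    then show ?thesis using that by blast
  qed
  define P' where "P' = {x. \<exists>s\<in>homog RG. s \<notin> p \<and> smul s x \<in> N}"
  have P'sub: "M.subspace P'" unfolding M.subspace_def
  proof (intro conjI ballI allI)
    show "0 \<in> P'" unfolding P'_def using s0 M.subspace_0[OF Nsub] by auto
  next
    fix x y assume "x \<in> P'" "y \<in> P'"
    then obtain s t where st: "s \<in> homog RG" "s \<notin> p" "smul s x \<in> N"
      "t \<in> homog RG" "t \<notin> p" "smul t y \<in> N" unfolding P'_def by blast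
    have "smul (s * t) (x + y) = smul t (smul s x) + smul s (smul t y)"
      by (simp add: M.scale_right_distrib mult.commute)
    also have "\<dots> \<in> N" using st M.subspace_scale[OF Nsub] M.subspace_add[OF Nsub] by blast
    finally show "x + y \<in> P'" unfolding P'_def using hm[OF st(1,2,4,5)] by blast
  next
    fix c x assume "x \<in> P'"
    then obtain s where s: "s \<in> homog RG" "s \<notin> p" "smul s x \<in> N" unfolding P'_def by blast
    have "smul s (smul c x) = smul c (smul s x)" by (rule M.scale_left_commute)
    also have "\<dots> \<in> N" using s(3) M.subspace_scale[OF Nsub] by blast
    finally show "smul c x \<in> P'" unfolding P'_def using s(1,2) by blast
  qed
  have P'g: "graded_submodule smul MG P'"
  proof (rule graded_intro[OF P'sub])
    fix x assume "x \<in> P'"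
    then obtain s where s: "s \<in> homog RG" "s \<notin> p" "smul s x \<in> N" unfolding P'_def by blast
    obtain h where h: "s \<in> RG h" using s(1) by (rule homog_E)
    obtain d where d: "hdecomp MG x d" using ids_exists[OF idsM] by blast
    have hd: "hdecomp MG (smul s x) (\<lambda>k. smul s (d (- h + k)))"
    proof (rule hdecomp_shift[OF d, where \<phi> = "\<lambda>g. h + g"])
      show "smul s (a + b) = smul s a + smul s b" for a b by (rule M.scale_right_distrib)
      show "smul s a \<in> MG (h + g)" if "a \<in> MG g" for g a using degM[OF h that] .
    qed (auto simp: add.assoc[symmetric])
    have "d g \<in> homog MG \<inter> P'" for g
    proof -
      have "smul s (d (- h + (h + g))) \<in> N" by (rule comp_in[OF Ng s(3) hd])
      then have "smul s (d g) \<in> N" by (simp add: add.assoc[symmetric])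
      then have "d g \<in> P'" unfolding P'_def using s(1,2) by blast
      moreover have "d g \<in> homog MG" by (rule homog_I[of _ MG g, OF hdecomp_in[OF d]])
      ultimately show ?thesis by blast
    qed
    then show "\<exists>xs. set xs \<subseteq> homog MG \<inter> P' \<and> x = sum_list xs" by (rule hdecomp_list_in[OF d])
  qed
  have KP': "K \<subseteq> P'"
  proof
    fix x assume "x \<in> K"
    then have "smul s0 x \<in> K" using M.subspace_scale[OF graded_sub_subspace[OF K]] by blast
    then show "x \<in> P'" unfolding P'_def using s0 KN by blast
  qed
  have col1: "p \<subseteq> colon smul P'"
  proof
    fix r assume r: "r \<in> p"
    have "smul r x \<in> P'" for x
    proof -
      have "smul s0 (smul r x) = smul r (smul s0 x)" by (rule M.scale_left_commute)
      also have "\<dots> \<in> N" by (rule genN[OF r])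
      finally show ?thesis unfolding P'_def using s0 by blast
    qed
    then show "r \<in> colon smul P'" unfolding colon_def by blast
  qed
  have col2: "colon smul P' \<subseteq> p"
  proof (rule graded_ideal_sub[OF colon_graded[OF P'g] pidl])
    fix r assume r: "r \<in> homog RG" "r \<in> colon smul P'"
    show "r \<in> p"
    proof (rule ccontr)
      assume rp: "r \<notin> p"
      obtain S where S: "finite S" "M.span S = UNIV" using fg unfolding finitely_generated_def by blast
      have "\<forall>x. \<exists>s. s \<in> homog RG \<and> s \<notin> p \<and> smul s (smul r x) \<in> N"
        using r(2) unfolding colon_def P'_def by blast
      then have "\<exists>\<sigma>. \<forall>x. \<sigma> x \<in> homog RG \<and> \<sigma> x \<notin> p \<and> smul (\<sigma> x) (smul r x) \<in> N"
        by (rule choice)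
      then obtain \<sigma> where \<sigma>: "\<And>x. \<sigma> x \<in> homog RG" "\<And>x. \<sigma> x \<notin> p"
        "\<And>x. smul (\<sigma> x) (smul r x) \<in> N" by blast
      define t where "t = r * prod \<sigma> S"
      have tF: "r * prod \<sigma> F \<in> homog RG \<and> r * prod \<sigma> F \<notin> p" if "finite F" for F
        using that
      proof (induction F rule: finite_induct)
        case empty then show ?case using r(1) rp by simp
      next
        case (insert x F)
        have "r * prod \<sigma> (insert x F) = (r * prod \<sigma> F) * \<sigma> x"
          using insert.hyps by (simp add: mult_ac)
        then show ?case using hm[of "r * prod \<sigma> F" "\<sigma> x"] insert.IH \<sigma>(1,2) by simp
      qed
      have t: "t \<in> homog RG" "t \<notin> p" using tF[OF S(1)] unfolding t_def by blast+
      have tS: "smul t x \<in> N" if x: "x \<in> S" for x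
      proof -
        have "t = prod \<sigma> (S - {x}) * (\<sigma> x * r)"
          unfolding t_def using prod.remove[OF S(1) x, of \<sigma>] by (simp add: mult_ac)
        then have "smul t x = smul (prod \<sigma> (S - {x})) (smul (\<sigma> x) (smul r x))" by simp
        also have "\<dots> \<in> N" using \<sigma>(3) M.subspace_scale[OF Nsub] by blast
        finally show ?thesis .
      qed
      have tall: "smul t m \<in> N" for m
      proof -
        have "m \<in> M.span S" using S(2) by simp
        then have "m \<in> {y. smul t y \<in> N}"
          by (rule M.span_subspace_induct[OF _ preimage_subspace[OF Nsub]]) (use tS in blast)
        then show ?thesis by simp
      qed
      obtain n a where na: "n > 0" "a \<in> p" "\<forall>m. smul (t ^ n + a) m \<in> K"
        using M.det_trick[OF S graded_sub_subspace[OF K] pidl, of t] tall unfolding N_def by blast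
      then have "t ^ n + a \<in> colon smul K" unfolding colon_def by blast
      then have "t ^ n + a \<in> p" using Kp by blast
      then have "(t ^ n + a) - a \<in> p" using idl_diff[OF pidl _ na(2)] by blast
      then have "t ^ n \<in> p" by simp
      then have "t \<in> p" using pprime_pow[OF pr homR_mult t(1) na(1)] by blast
      then show False using t(2) by blast
    qed
  qed
  have colP': "colon smul P' = p" using col1 col2 by blast
  have P'n: "P' \<noteq> UNIV"
  proof
    assume "P' = UNIV"
    then have "colon smul P' = UNIV" unfolding colon_def by simp
    then show False using colP' pn by simp
  qed
  have "m \<in> P' \<or> r \<in> colon smul P'"
    if rm: "r \<in> homog RG" "m \<in> homog MG" "smul r m \<in> P'" for r m
  proof (cases "r \<in> p")
    case True then show ?thesis using colP' by blast
  next
    case False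
    obtain s where s: "s \<in> homog RG" "s \<notin> p" "smul s (smul r m) \<in> N" using rm(3) unfolding P'_def by blast
    have "smul (s * r) m \<in> N" using s(3) by simp
    then have "m \<in> P'" unfolding P'_def using hm[OF s(1,2) rm(1) False] by blast
    then show ?thesis by blast
  qed
  then have "graded_prime_submodule smul RG MG P'"
    unfolding graded_prime_submodule_def using P'g P'n by blast
  then show ?thesis using KP' colP' unfolding Spec_g_def by blast
qed

lemma spec_qp:
  assumes fg: "finitely_generated smul" and P: "P \<in> Spec_g smul RG MG"
  shows "P \<in> qp_Spec_g smul RG MG"
proof -
  have Ppr: "graded_prime_submodule smul RG MG P" using P unfolding Spec_g_def by blast
  have Pg: "graded_submodule smul MG P" using Ppr unfolding graded_prime_submodule_def by blast
  have "graded_primeful smul RG MG P" unfolding graded_primeful_def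
    using lu[OF fg Pg] by blast
  then show ?thesis unfolding qp_Spec_g_def using prime_qp0[OF Ppr] by blast
qed

lemma max_sep:
  assumes fg: "finitely_generated smul" and eq: "qp_Spec_g smul RG MG = Max_g smul MG"
    and Q: "Q \<in> Max_g smul MG" and Q': "Q' \<in> Max_g smul MG"
    and GQ: "graded_radical RG (colon smul Q) \<subseteq> graded_radical RG (colon smul Q')"
  shows "Q = Q'"
proof (rule ccontr)
  assume ne: "Q \<noteq> Q'"
  note Qp = max_props[OF Q] and Q'p = max_props[OF Q']
  have Qpr: "graded_prime_submodule smul RG MG Q" by (rule max_prime[OF Q])
  have Q'pr: "graded_prime_submodule smul RG MG Q'" by (rule max_prime[OF Q'])
  have cQ'g: "graded_ideal RG (colon smul Q')" by (rule colon_graded[OF Q'p(1)])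
  have idlQ': "idl (colon smul Q')" by (rule graded_ideal_idl[OF cQ'g])
  have sub: "colon smul Q \<subseteq> colon smul Q'"
  proof (rule graded_ideal_sub[OF colon_graded[OF Qp(1)] idlQ'])
    fix r assume r: "r \<in> homog RG" "r \<in> colon smul Q"
    then have "r \<in> graded_radical RG (colon smul Q)" using ideal_sub_Gr[OF colon_graded[OF Qp(1)]] by blast
    then have "r \<in> graded_radical RG (colon smul Q')" using GQ by blast
    then have "r \<in> rad (colon smul Q')" using Gr_homog[OF idlQ' r(1)] by blast
    then obtain n where n: "n > 0" "r ^ n \<in> colon smul Q'" unfolding rad_def by blast
    show "r \<in> colon smul Q'" by (rule prime_colon_pow[OF Q'pr r(1) n])
  qed
  have "colon smul Q' \<noteq> UNIV" using colon_UNIV_iff Q'p(2) by blast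
  then have ceq: "colon smul Q' = colon smul Q" using colon_max[OF fg Q cQ'g _ sub] by blast
  define D where "D = Q \<inter> Q'"
  have Dg: "graded_submodule smul MG D" unfolding D_def by (rule graded_inter[OF Qp(1) Q'p(1)])
  have cD: "colon smul D = colon smul Q" unfolding D_def colon_inter using ceq by blast
  have Dn: "D \<noteq> UNIV" unfolding D_def using Qp(2) by blast
  have prQ: "\<forall>r\<in>homog RG. \<forall>m\<in>homog MG. smul r m \<in> Q \<longrightarrow> m \<in> Q \<or> r \<in> colon smul Q"
    using Qpr unfolding graded_prime_submodule_def by blast
  have prQ': "\<forall>r\<in>homog RG. \<forall>m\<in>homog MG. smul r m \<in> Q' \<longrightarrow> m \<in> Q' \<or> r \<in> colon smul Q'"
    using Q'pr unfolding graded_prime_submodule_def by blast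
  have "m \<in> D \<or> r \<in> colon smul D"
    if "r \<in> homog RG" "m \<in> homog MG" "smul r m \<in> D" for r m
    using that prQ prQ' cD ceq unfolding D_def by blast
  then have Dpr: "graded_prime_submodule smul RG MG D"
    unfolding graded_prime_submodule_def using Dg Dn by blast
  have "graded_primeful smul RG MG D" unfolding graded_primeful_def
  proof (intro allI impI)
    fix p assume p: "graded_prime_ideal RG p \<and> colon smul D \<subseteq> p"
    then have "p = colon smul Q" using colon_max[OF fg Q] cD unfolding graded_prime_ideal_def by blast
    then show "\<exists>P\<in>Spec_g smul RG MG. D \<subseteq> P \<and> colon smul P = p"
      using Dpr cD unfolding Spec_g_def by blast
  qed
  then have "D \<in> qp_Spec_g smul RG MG" unfolding qp_Spec_g_def using prime_qp0[OF Dpr] by blast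
  then have DM: "D \<in> Max_g smul MG" using eq by simp
  have "Q = D" using max_props(3)[OF DM Qp(1)] Qp(2) unfolding D_def by blast
  then have "Q \<subseteq> Q'" unfolding D_def by blast
  then have "Q' = Q" using Qp(3)[OF Q'p(1)] Q'p(2) by blast
  then show False using ne by simp
qed

end

theorem theorem4p5:
  fixes smul :: "'r::comm_ring_1 \<Rightarrow> 'm::ab_group_add \<Rightarrow> 'm"
    and RG :: "'g::group_add \<Rightarrow> 'r set"
    and MG :: "'g \<Rightarrow> 'm set"
  assumes "graded_module smul RG MG"
    and "finitely_generated smul"
  shows "(t1_space (quasi_zariski smul RG MG) \<longleftrightarrow> qp_Spec_g smul RG MG = Max_g smul MG)
    \<and> (qp_Spec_g smul RG MG = Max_g smul MG \<longrightarrow>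
         qp_Spec_g smul RG MG = Spec_g smul RG MG \<and> Spec_g smul RG MG = Max_g smul MG)"
proof -
  interpret gmod smul RG MG using assms(1) by (simp add: gmod_def)
  note fg = assms(2)
  have T: "topspace (quasi_zariski smul RG MG) = qp_Spec_g smul RG MG" by (rule topspace_qz[OF fg])
  have O: "openin (quasi_zariski smul RG MG) = qz_open" by (rule openin_qz[OF fg])
  have MQ: "Max_g smul MG \<subseteq> qp_Spec_g smul RG MG" using max_qp[OF fg] by blast
  have iff: "t1_space (quasi_zariski smul RG MG) \<longleftrightarrow> qp_Spec_g smul RG MG = Max_g smul MG"
  proof
    assume t1: "t1_space (quasi_zariski smul RG MG)"
    have "qp_Spec_g smul RG MG \<subseteq> Max_g smul MG"
    proof
      fix Q assume Q: "Q \<in> qp_Spec_g smul RG MG"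
      obtain K where K: "K \<in> Max_g smul MG" "Q \<subseteq> K"
        using exists_max[OF fg qp_graded[OF Q] qp_proper[OF Q]] by blast
      have Kq: "K \<in> qp_Spec_g smul RG MG" using MQ K(1) by blast
      show "Q \<in> Max_g smul MG"
      proof (cases "K = Q")
        case True then show ?thesis using K(1) by simp
      next
        case False
        then obtain U where U: "qz_open U" "K \<in> U" "Q \<notin> U"
          using t1 Kq Q unfolding t1_space_def T O by blast
        then obtain L where L: "graded_submodule smul MG L" "U = qp_Spec_g smul RG MG - qp_V smul RG MG L"
          unfolding qz_open_def by blast
        have "Q \<in> qp_V smul RG MG L" using U(3) L(2) Q by blast
        then have "graded_radical RG (colon smul L) \<subseteq> graded_radical RG (colon smul Q)"
          unfolding qp_V_def by blast
        moreover have "colon smul Q \<subseteq> colon smul K" using K(2) unfolding colon_def by blast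
        ultimately have "graded_radical RG (colon smul L) \<subseteq> graded_radical RG (colon smul K)"
          using Gr_mono by blast
        then have "K \<in> qp_V smul RG MG L" using Kq unfolding qp_V_def by blast
        then show ?thesis using U(2) L(2) by blast
      qed
    qed
    then show "qp_Spec_g smul RG MG = Max_g smul MG" using MQ by blast
  next
    assume eq: "qp_Spec_g smul RG MG = Max_g smul MG"
    show "t1_space (quasi_zariski smul RG MG)" unfolding t1_space_def T O
    proof (intro ballI impI)
      fix x y assume x: "x \<in> qp_Spec_g smul RG MG" and y: "y \<in> qp_Spec_g smul RG MG" and xy: "x \<noteq> y"
      let ?U = "qp_Spec_g smul RG MG - qp_V smul RG MG y"
      have "qz_open ?U" unfolding qz_open_def using qp_graded[OF y] by blast
      moreover have "x \<notin> qp_V smul RG MG y"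
      proof
        assume "x \<in> qp_V smul RG MG y"
        then have "graded_radical RG (colon smul y) \<subseteq> graded_radical RG (colon smul x)"
          unfolding qp_V_def by blast
        then have "y = x" using max_sep[OF fg eq] x y eq by blast
        then show False using xy by simp
      qed
      moreover have "y \<in> qp_V smul RG MG y" using y unfolding qp_V_def by blast
      ultimately show "\<exists>U. qz_open U \<and> x \<in> U \<and> y \<notin> U" using x by blast
    qed
  qed
  have part2: "qp_Spec_g smul RG MG = Max_g smul MG \<longrightarrow>
         qp_Spec_g smul RG MG = Spec_g smul RG MG \<and> Spec_g smul RG MG = Max_g smul MG"
  proof
    assume eq: "qp_Spec_g smul RG MG = Max_g smul MG"
    have "Spec_g smul RG MG \<subseteq> qp_Spec_g smul RG MG" using spec_qp[OF fg] by blast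
    moreover have "Max_g smul MG \<subseteq> Spec_g smul RG MG" using max_prime unfolding Spec_g_def by blast
    ultimately show "qp_Spec_g smul RG MG = Spec_g smul RG MG \<and> Spec_g smul RG MG = Max_g smul MG"
      using eq by blast
  qed
  show ?thesis using iff part2 by blast
qed

end
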